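(* Let $k=2\kappa+1$ with $\kappa\in\{0,1,2,\dots\}$, and let $C_1,C_2>0$ and $\alpha,\beta>0$ be constants independent of $h$. Then there exist constants $\widetilde C_1,\widetilde C_2>0$ independent of $h$ such that for every $N\ge1$ (with $h=1/N$) and every $1$-periodic $v\in L^2_{\mathrm{loc}}(\mathbb{R})$: (a) if $\max_{1\le i\le N}|(v,\ell_i)|\le C_1h^{\alpha}$, then $\|\pi_1v\|\le\widetilde C_1h^{\alpha-1}$; (b) if $\max_{1\le i\le N,\,1\le m\le k-1}|(v,q_{i,m})|\le C_2h^{\beta}$, then $\|\pi_2 v\|\le\widetilde C_2h^{\beta-1}$.
   Context: For $N\ge1$, $h=1/N$, $x_i=ih$ ($i\in\mathbb{Z}$). $C_p$ is the space of continuous $1$-periodic real functions; $\mathcal{V}_h^k=\{\phi\in C_p:\ \phi|_{[x_{i-1},x_i]}\text{ is a polynomial of degree}\le k,\ i=1,\dots,N\}$. $(\cdot,\cdot)$, $\|\cdot\|$ denote the inner product and norm of $L^2(0,1)$. Let $\mathcal{S}_h^2=\{\phi\in\mathcal{V}_h^k:\phi(x_i)=0\ \text{for all } i\}$, $\mathcal{S}_h^1$ its $L^2(0,1)$-orthogonal complement in $\mathcal{V}_h^k$, and $\pi_1,\pi_2$ the $L^2(0,1)$-orthogonal projections onto $\mathcal{S}_h^1,\mathcal{S}_h^2$. Let $\psi(x)=\frac{1}{k!}\frac{1}{x(1-x)}\frac{d^{k-1}}{dx^{k-1}}[x^{k+1}(1-x)^k]$ (a polynomial of degree $k$ on $[0,1]$).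 For $i=1,\dots,N$, $\ell_i$ is the $1$-periodic function which on one period equals $\psi((x-x_{i-1})/h)$ for $x\in[x_{i-1},x_i]$, $\psi((x_{i+1}-x)/h)$ for $x\in[x_i,x_{i+1}]$, and $0$ on the rest of the period (indices of nodes taken modulo $N$). For $\nu=1,\dots,k-1$ let $\phi_\nu(x)=x(1-x)\binom{k-2}{\nu-1}x^{\nu-1}(1-x)^{k-1-\nu}$ on $[0,1]$, and let $q_{i,\nu}$ be the $1$-periodic function equal to $\phi_\nu((x-x_{i-1})/h)$ on $[x_{i-1},x_i]$ and $0$ on the rest of the period. (For $k=1$ there are no $q_{i,m}$, $\mathcal{S}_h^2=\{0\}$ and (b) is vacuous.) *)

theory Defs
  imports "HOL-Analysis.Analysis" "HOL-Computational_Algebra.Polynomial"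
begin

definition node :: "nat \<Rightarrow> int \<Rightarrow> real" where
  "node N i = real_of_int i / real N"

definition ip :: "(real \<Rightarrow> real) \<Rightarrow> (real \<Rightarrow> real) \<Rightarrow> real" where
  "ip f g = (LINT x:{0..1}|lborel. f x * g x)"

definition l2norm :: "(real \<Rightarrow> real) \<Rightarrow> real" where
  "l2norm f = sqrt (ip f f)"

definition periodic1 :: "(real \<Rightarrow> real) \<Rightarrow> bool" where
  "periodic1 f \<longleftrightarrow> (\<forall>x. f (x + 1) = f x)"

definition Vh :: "nat \<Rightarrow> nat \<Rightarrow> (real \<Rightarrow> real) set" where
  "Vh k N = {\<phi>. continuous_on UNIV \<phi> \<and> periodic1 \<phi> \<and>
      (\<forall>i\<in>{1..N}. \<exists>p :: real poly. degree p \<le> k \<and>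
          (\<forall>x\<in>{node N (int i - 1)..node N (int i)}. \<phi> x = poly p x))}"

definition S2 :: "nat \<Rightarrow> nat \<Rightarrow> (real \<Rightarrow> real) set" where
  "S2 k N = {\<phi> \<in> Vh k N. \<forall>i. \<phi> (node N i) = 0}"

definition S1 :: "nat \<Rightarrow> nat \<Rightarrow> (real \<Rightarrow> real) set" where
  "S1 k N = {\<phi> \<in> Vh k N. \<forall>\<psi>\<in>S2 k N. ip \<phi> \<psi> = 0}"

definition l2proj :: "(real \<Rightarrow> real) set \<Rightarrow> (real \<Rightarrow> real) \<Rightarrow> (real \<Rightarrow> real)" where
  "l2proj S v = (THE p. p \<in> S \<and> (\<forall>w\<in>S. ip (\<lambda>x. v x - p x) w = 0))"

definition pi1 :: "nat \<Rightarrow> nat \<Rightarrow> (real \<Rightarrow> real) \<Rightarrow> (real \<Rightarrow> real)" where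
  "pi1 k N = l2proj (S1 k N)"

definition pi2 :: "nat \<Rightarrow> nat \<Rightarrow> (real \<Rightarrow> real) \<Rightarrow> (real \<Rightarrow> real)" where
  "pi2 k N = l2proj (S2 k N)"

definition psi_poly :: "nat \<Rightarrow> real poly" where
  "psi_poly k = (pderiv ^^ (k - 1)) ([:0, 1:] ^ (k + 1) * [:1, -1:] ^ k)
                   div ([:0, 1:] * [:1, -1:])"

definition psi :: "nat \<Rightarrow> real \<Rightarrow> real" where
  "psi k x = poly (psi_poly k) x / fact k"

definition ell_loc :: "nat \<Rightarrow> nat \<Rightarrow> real \<Rightarrow> real" where
  "ell_loc k N t = (let h = 1 / real N in
      if - h \<le> t \<and> t \<le> 0 then psi k ((t + h) / h)
      else if 0 < t \<and> t \<le> h then psi k ((h - t) / h)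
      else 0)"

definition ell :: "nat \<Rightarrow> nat \<Rightarrow> nat \<Rightarrow> real \<Rightarrow> real" where
  "ell k N i x = infsum (\<lambda>n::int. ell_loc k N (x - node N (int i) - of_int n)) UNIV"

definition phi :: "nat \<Rightarrow> nat \<Rightarrow> real \<Rightarrow> real" where
  "phi k \<nu> x = x * (1 - x) * real ((k - 2) choose (\<nu> - 1)) * x ^ (\<nu> - 1) * (1 - x) ^ (k - 1 - \<nu>)"

definition q_loc :: "nat \<Rightarrow> nat \<Rightarrow> nat \<Rightarrow> real \<Rightarrow> real" where
  "q_loc k N \<nu> t = (let h = 1 / real N in
      if 0 \<le> t \<and> t \<le> h then phi k \<nu> (t / h) else 0)"

definition q :: "nat \<Rightarrow> nat \<Rightarrow> nat \<Rightarrow> nat \<Rightarrow> real \<Rightarrow> real" where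
  "q k N i \<nu> x = infsum (\<lambda>n::int. q_loc k N \<nu> (x - node N (int i - 1) - of_int n)) UNIV"

end

theory Submission
  imports Defs
begin

definition L2 :: "(real \<Rightarrow> real) \<Rightarrow> bool" where
  "L2 f \<longleftrightarrow> f \<in> borel_measurable lborel \<and> set_integrable lborel {0..1} (\<lambda>x. (f x)\<^sup>2)"

lemma abs_prod_le_sq: "\<bar>(a::real) * b\<bar> \<le> a\<^sup>2 + b\<^sup>2"
proof -
  have "0 \<le> (\<bar>a\<bar> - \<bar>b\<bar>)\<^sup>2" by simp
  hence "2 * (\<bar>a\<bar> * \<bar>b\<bar>) \<le> \<bar>a\<bar>\<^sup>2 + \<bar>b\<bar>\<^sup>2" by (simp add: power2_diff)
  moreover have "0 \<le> \<bar>a\<bar>\<^sup>2 + \<bar>b\<bar>\<^sup>2" by simp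
  ultimately have "\<bar>a\<bar> * \<bar>b\<bar> \<le> a\<^sup>2 + b\<^sup>2"
    using mult_nonneg_nonneg[OF abs_ge_zero[of a] abs_ge_zero[of b]] by (simp only: power2_abs)
  then show ?thesis by (simp only: abs_mult)
qed

lemma L2_prod: assumes "L2 f" "L2 g" shows "set_integrable lborel {0..1} (\<lambda>x. f x * g x)"
proof (rule set_integrable_bound)
  show "set_integrable lborel {0..1} (\<lambda>x. (f x)\<^sup>2 + (g x)\<^sup>2)"
    using assms unfolding L2_def by (intro set_integral_add) auto
  show "set_borel_measurable lborel {0..1} (\<lambda>x. f x * g x)"
    using assms unfolding L2_def set_borel_measurable_def
    by (intro borel_measurable_scaleR borel_measurable_indicator borel_measurable_times) auto
  show "AE x in lborel. x \<in> {0..1} \<longrightarrow> norm (f x * g x) \<le> norm ((f x)\<^sup>2 + (g x)\<^sup>2)"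
    using abs_prod_le_sq by (intro AE_I2) (auto simp: abs_of_nonneg)
qed

lemma L2_add: assumes "L2 f" "L2 g" shows "L2 (\<lambda>x. f x + g x)"
  unfolding L2_def
proof
  show "(\<lambda>x. f x + g x) \<in> borel_measurable lborel" using assms unfolding L2_def
    by (intro borel_measurable_add) auto
  have "set_integrable lborel {0..1} (\<lambda>x. (f x)\<^sup>2 + (g x)\<^sup>2 + 2 * (f x * g x))"
    using assms L2_prod[OF assms] unfolding L2_def by (intro set_integral_add set_integrable_mult_right) auto
  then show "set_integrable lborel {0..1} (\<lambda>x. (f x + g x)\<^sup>2)"
    by (simp add: power2_eq_square algebra_simps)
qed

lemma L2_scale: assumes "L2 f" shows "L2 (\<lambda>x. c * f x)"
  unfolding L2_def
proof
  show "(\<lambda>x. c * f x) \<in> borel_measurable lborel" using assms unfolding L2_def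
    by (intro borel_measurable_times) auto
  have "set_integrable lborel {0..1} (\<lambda>x. c\<^sup>2 * (f x)\<^sup>2)"
    using assms unfolding L2_def by (intro set_integrable_mult_right) auto
  then show "set_integrable lborel {0..1} (\<lambda>x. (c * f x)\<^sup>2)"
    by (simp add: power_mult_distrib)
qed

lemma L2_diff: assumes "L2 f" "L2 g" shows "L2 (\<lambda>x. f x - g x)"
  using L2_add[OF assms(1) L2_scale[OF assms(2), of "-1"]] by simp

lemma L2_zero: "L2 (\<lambda>x. 0)"
  unfolding L2_def by (simp add: set_integrable_def)

lemma L2_sum: assumes "finite I" "\<And>i. i \<in> I \<Longrightarrow> L2 (g i)"
  shows "L2 (\<lambda>x. \<Sum>j\<in>I. c j * g j x)"
  using assms
proof (induction I rule: finite_induct)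
  case empty then show ?case by (simp add: L2_zero)
next
  case (insert a F)
  then show ?case by (simp add: L2_add L2_scale)
qed

lemma L2_cont: assumes "continuous_on UNIV f" shows "L2 f"
  unfolding L2_def
proof
  show "f \<in> borel_measurable lborel" using assms
    by (simp add: borel_measurable_continuous_onI)
  show "set_integrable lborel {0..1} (\<lambda>x. (f x)\<^sup>2)"
    by (rule borel_integrable_atLeastAtMost') (intro continuous_intros continuous_on_subset[OF assms], auto)
qed

lemma ip_sym: "ip f g = ip g f"
  unfolding ip_def by (simp add: mult.commute)

lemma ip_cong: assumes "\<And>x. x \<in> {0..1} \<Longrightarrow> f x = f' x" "\<And>x. x \<in> {0..1} \<Longrightarrow> g x = g' x"
  shows "ip f g = ip f' g'"
  unfolding ip_def using assms by (intro set_lebesgue_integral_cong) auto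

lemma ip_add: assumes "L2 f" "L2 g" "L2 h" shows "ip (\<lambda>x. f x + g x) h = ip f h + ip g h"
  unfolding ip_def using L2_prod[OF assms(1,3)] L2_prod[OF assms(2,3)]
  by (simp add: distrib_right)

lemma ip_scale: "ip (\<lambda>x. c * f x) h = c * ip f h"
  unfolding ip_def by (simp add: mult.assoc)

lemma ip_diff: assumes "L2 f" "L2 g" "L2 h" shows "ip (\<lambda>x. f x - g x) h = ip f h - ip g h"
  using ip_add[OF assms(1) L2_scale[OF assms(2), of "-1"] assms(3)] ip_scale[of "-1" g h] by simp

lemma ip_zero: "ip (\<lambda>x. 0) h = 0"
  unfolding ip_def by simp

lemma ip_sum: assumes "finite I" "\<And>i. i \<in> I \<Longrightarrow> L2 (g i)" "L2 h"
  shows "ip (\<lambda>x. \<Sum>j\<in>I. c j * g j x) h = (\<Sum>j\<in>I. c j * ip (g j) h)"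
  using assms(1,2)
proof (induction I rule: finite_induct)
  case empty then show ?case by (simp add: ip_zero)
next
  case (insert a F)
  have "ip (\<lambda>x. \<Sum>j\<in>insert a F. c j * g j x) h = ip (\<lambda>x. c a * g a x + (\<Sum>j\<in>F. c j * g j x)) h"
    using insert by simp
  also have "\<dots> = c a * ip (g a) h + ip (\<lambda>x. \<Sum>j\<in>F. c j * g j x) h"
    using insert assms(3) by (subst ip_add) (auto intro: L2_scale L2_sum simp: ip_scale)
  finally show ?case using insert by simp
qed

lemma ip_nonneg: "0 \<le> ip f f"
  unfolding ip_def set_lebesgue_integral_def
  by (intro integral_nonneg_AE) (auto simp: indicator_def)

lemma ip_expand: assumes "L2 u" "L2 g"
  shows "ip (\<lambda>x. u x - t * g x) (\<lambda>x. u x - t * g x) = ip u u - 2 * t * ip u g + t\<^sup>2 * ip g g"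
proof -
  have g': "L2 (\<lambda>x. t * g x)" using assms(2) by (rule L2_scale)
  have "ip (\<lambda>x. u x - t * g x) (\<lambda>x. u x - t * g x) = ip u (\<lambda>x. u x - t * g x) - t * ip g (\<lambda>x. u x - t * g x)"
    using assms g' L2_diff by (simp add: ip_diff ip_scale)
  also have "ip u (\<lambda>x. u x - t * g x) = ip u u - t * ip u g"
    using assms g' by (subst ip_sym, subst ip_diff) (auto simp: ip_scale ip_sym)
  also have "ip g (\<lambda>x. u x - t * g x) = ip g u - t * ip g g"
    using assms g' by (subst ip_sym, subst ip_diff) (auto simp: ip_scale ip_sym)
  finally show ?thesis by (simp add: ip_sym[of g u] power2_eq_square algebra_simps)
qed

lemma ip_cs0: assumes "L2 u" "L2 g" "ip g g = 0" shows "ip u g = 0"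
proof (rule ccontr)
  assume a: "ip u g \<noteq> 0"
  define t where "t = (ip u u + 1) / (2 * ip u g)"
  have "0 \<le> ip (\<lambda>x. u x - t * g x) (\<lambda>x. u x - t * g x)" by (rule ip_nonneg)
  also have "\<dots> = ip u u - 2 * t * ip u g" using ip_expand[OF assms(1,2)] assms(3) by simp
  also have "\<dots> = -1" using a by (simp add: t_def field_simps)
  finally show False by simp
qed

lemma ip_orth_sum: assumes "finite F" "\<And>i. i \<in> F \<Longrightarrow> L2 (g i)" "L2 w" "\<And>i. i \<in> F \<Longrightarrow> ip w (g i) = 0"
  shows "ip w (\<lambda>x. \<Sum>j\<in>F. c j * g j x) = 0"
  using assms by (subst ip_sym, subst ip_sum) (auto simp: ip_sym)

lemma proj_exists:
  assumes "finite I" "\<And>i. i \<in> I \<Longrightarrow> L2 (g i)" "L2 v"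
  shows "\<exists>c. \<forall>i\<in>I. ip (\<lambda>x. v x - (\<Sum>j\<in>I. c j * g j x)) (g i) = 0"
  using assms
proof (induction I arbitrary: v rule: finite_induct)
  case empty then show ?case by simp
next
  case (insert a F)
  have gF: "\<And>i. i \<in> F \<Longrightarrow> L2 (g i)" and ga: "L2 (g a)" using insert by auto
  obtain d where d: "\<forall>i\<in>F. ip (\<lambda>x. g a x - (\<Sum>j\<in>F. d j * g j x)) (g i) = 0"
    using insert.IH[OF gF ga] by blast
  obtain e where e: "\<forall>i\<in>F. ip (\<lambda>x. v x - (\<Sum>j\<in>F. e j * g j x)) (g i) = 0"
    using insert.IH[OF gF insert.prems(2)] by blast
  define g' where "g' = (\<lambda>x. g a x - (\<Sum>j\<in>F. d j * g j x))"
  define r where "r = (\<lambda>x. v x - (\<Sum>j\<in>F. e j * g j x))"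
  have Lg': "L2 g'" unfolding g'_def using gF ga insert by (intro L2_diff L2_sum) auto
  have Lr: "L2 r" unfolding r_def using gF insert by (intro L2_diff L2_sum) auto
  define \<alpha> where "\<alpha> = (if ip g' g' = 0 then 0 else ip r g' / ip g' g')"
  define c where "c = (\<lambda>j. if j = a then \<alpha> else e j - \<alpha> * d j)"
  have sumc: "(\<Sum>j\<in>insert a F. c j * g j x) = (\<Sum>j\<in>F. e j * g j x) + \<alpha> * g' x" for x
  proof -
    have "(\<Sum>j\<in>insert a F. c j * g j x) = \<alpha> * g a x + (\<Sum>j\<in>F. (e j - \<alpha> * d j) * g j x)"
      using insert(1,2) by (simp add: c_def) (intro sum.cong, auto)
    also have "\<dots> = (\<Sum>j\<in>F. e j * g j x) + \<alpha> * g' x"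
      by (simp add: g'_def algebra_simps sum_subtractf sum_distrib_left)
    finally show ?thesis .
  qed
  have res: "(\<lambda>x. v x - (\<Sum>j\<in>insert a F. c j * g j x)) = (\<lambda>x. r x - \<alpha> * g' x)"
    by (rule ext) (simp add: sumc r_def)
  have Lres: "L2 (\<lambda>x. r x - \<alpha> * g' x)" using Lr Lg' by (intro L2_diff L2_scale)
  have orthF: "ip (\<lambda>x. r x - \<alpha> * g' x) (g i) = 0" if "i \<in> F" for i
  proof -
    have "ip (\<lambda>x. r x - \<alpha> * g' x) (g i) = ip r (g i) - \<alpha> * ip g' (g i)"
      using Lr Lg' gF that by (simp add: ip_diff L2_scale ip_scale)
    also have "\<dots> = 0" using d e that unfolding r_def g'_def by simp
    finally show ?thesis .
  qed
  have orthg': "ip (\<lambda>x. r x - \<alpha> * g' x) g' = 0"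
  proof -
    have "ip (\<lambda>x. r x - \<alpha> * g' x) g' = ip r g' - \<alpha> * ip g' g'"
      using Lr Lg' by (simp add: ip_diff L2_scale ip_scale)
    also have "\<dots> = 0"
    proof (cases "ip g' g' = 0")
      case True then show ?thesis using ip_cs0[OF Lr Lg'] by (simp add: \<alpha>_def)
    next
      case False then show ?thesis by (simp add: \<alpha>_def)
    qed
    finally show ?thesis .
  qed
  have ga_eq: "g a = (\<lambda>x. g' x + (\<Sum>j\<in>F. d j * g j x))" by (rule ext) (simp add: g'_def)
  have orth_a: "ip (\<lambda>x. r x - \<alpha> * g' x) (g a) = 0"
  proof -
    have "ip (\<lambda>x. r x - \<alpha> * g' x) (g a) = ip (g a) (\<lambda>x. r x - \<alpha> * g' x)" by (rule ip_sym)
    also have "\<dots> = ip g' (\<lambda>x. r x - \<alpha> * g' x) + ip (\<lambda>x. \<Sum>j\<in>F. d j * g j x) (\<lambda>x. r x - \<alpha> * g' x)"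
      using Lg' gF insert Lres by (subst ga_eq, subst ip_add) (auto intro: L2_sum)
    also have "\<dots> = 0"
      using orthg' ip_orth_sum[OF insert(1) gF Lres orthF] by (simp add: ip_sym)
    finally show ?thesis .
  qed
  show ?case
    by (rule exI[of _ c]) (use orthF orth_a res in auto)
qed

lemma ip_cont_eq_integral: assumes "continuous_on UNIV f" "continuous_on UNIV g"
  shows "ip f g = integral {0..1} (\<lambda>x. f x * g x)"
proof -
  have "continuous_on {0..1} (\<lambda>x. f x * g x)"
    by (intro continuous_intros continuous_on_subset[OF assms(1)] continuous_on_subset[OF assms(2)]) auto
  then show ?thesis unfolding ip_def
    by (intro set_borel_integral_eq_integral borel_integrable_atLeastAtMost')
qed

lemma ip_zero_imp: assumes "continuous_on UNIV f" "ip f f = 0" shows "\<forall>x\<in>{0..1}. f x = 0"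
proof -
  have "integral {0..1} (\<lambda>x. (f x)\<^sup>2) = 0"
    using ip_cont_eq_integral[OF assms(1) assms(1)] assms(2) by (simp add: power2_eq_square)
  moreover have "continuous_on {0..1} (\<lambda>x. (f x)\<^sup>2)"
    by (intro continuous_intros continuous_on_subset[OF assms(1)]) auto
  ultimately have "\<forall>x\<in>{0..1}. (f x)\<^sup>2 = 0"
    using integral_eq_0_iff[of 0 1 "\<lambda>x. (f x)\<^sup>2"] by auto
  then show ?thesis by simp
qed

lemma coef_bound:
  fixes g :: "'i \<Rightarrow> real \<Rightarrow> real" and I :: "'i set"
  assumes "finite I" "\<And>i. i \<in> I \<Longrightarrow> continuous_on UNIV (g i)"
  shows "\<exists>K\<ge>0. \<forall>a. \<exists>c. (\<forall>x\<in>{0..1}. (\<Sum>j\<in>I. c j * g j x) = (\<Sum>j\<in>I. a j * g j x)) \<and>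
           (\<Sum>j\<in>I. (c j)\<^sup>2) \<le> K * ip (\<lambda>x. \<Sum>j\<in>I. a j * g j x) (\<lambda>x. \<Sum>j\<in>I. a j * g j x)"
  using assms
proof (induction I rule: finite_induct)
  case empty
  show ?case by (rule exI[of _ 0]) simp
next
  case (insert i0 F)
  have cF: "\<And>i. i \<in> F \<Longrightarrow> continuous_on UNIV (g i)" and ci0: "continuous_on UNIV (g i0)"
    using insert by auto
  have gF: "\<And>i. i \<in> F \<Longrightarrow> L2 (g i)" using cF L2_cont by blast
  obtain K0 where K0: "K0 \<ge> 0" and K0b: "\<forall>a. \<exists>c. (\<forall>x\<in>{0..1}. (\<Sum>j\<in>F. c j * g j x) = (\<Sum>j\<in>F. a j * g j x)) \<and>
           (\<Sum>j\<in>F. (c j)\<^sup>2) \<le> K0 * ip (\<lambda>x. \<Sum>j\<in>F. a j * g j x) (\<lambda>x. \<Sum>j\<in>F. a j * g j x)"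
    using insert.IH[OF cF] by blast
  obtain d where d: "\<forall>i\<in>F. ip (\<lambda>x. g i0 x - (\<Sum>j\<in>F. d j * g j x)) (g i) = 0"
    using proj_exists[of F g "g i0", OF insert(1) gF L2_cont[OF ci0]] by blast
  define g' where "g' = (\<lambda>x. g i0 x - (\<Sum>j\<in>F. d j * g j x))"
  have cg': "continuous_on UNIV g'" unfolding g'_def
    using ci0 cF by (intro continuous_intros) auto
  have Lg': "L2 g'" using cg' by (rule L2_cont)
  have g'orth: "ip g' (\<lambda>x. \<Sum>j\<in>F. c j * g j x) = 0" for c
    using ip_orth_sum[of F g, OF insert(1) gF Lg'] d unfolding g'_def by blast
  define D where "D = (\<Sum>j\<in>F. (d j)\<^sup>2)"
  have D0: "D \<ge> 0" unfolding D_def by (intro sum_nonneg) auto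
  show ?case
  proof (cases "ip g' g' = 0")
    case True
    have z: "\<forall>x\<in>{0..1}. g' x = 0" using ip_zero_imp[OF cg' True] .
    show ?thesis
    proof (rule exI[of _ K0], intro conjI allI)
      show "K0 \<ge> 0" by fact
      fix a :: "'i \<Rightarrow> real"
      define a' where "a' = (\<lambda>j. a j + a i0 * d j)"
      have eqw: "(\<Sum>j\<in>insert i0 F. a j * g j x) = (\<Sum>j\<in>F. a' j * g j x)" if "x \<in> {0..1}" for x
      proof -
        have "g i0 x = (\<Sum>j\<in>F. d j * g j x)" using z that unfolding g'_def by auto
        then show ?thesis using insert(1,2)
          by (simp add: a'_def algebra_simps sum.distrib sum_distrib_left)
      qed
      obtain c' where c'1: "\<forall>x\<in>{0..1}. (\<Sum>j\<in>F. c' j * g j x) = (\<Sum>j\<in>F. a' j * g j x)"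
        and c'2: "(\<Sum>j\<in>F. (c' j)\<^sup>2) \<le> K0 * ip (\<lambda>x. \<Sum>j\<in>F. a' j * g j x) (\<lambda>x. \<Sum>j\<in>F. a' j * g j x)"
        using K0b by blast
      define c where "c = c'(i0 := 0)"
      have s1: "(\<Sum>j\<in>insert i0 F. c j * g j x) = (\<Sum>j\<in>F. c' j * g j x)" for x
        using insert(1,2) unfolding c_def by (auto intro!: sum.cong)
      have s2: "(\<Sum>j\<in>insert i0 F. (c j)\<^sup>2) = (\<Sum>j\<in>F. (c' j)\<^sup>2)"
        using insert(1,2) unfolding c_def by (auto intro!: sum.cong)
      have ipeq: "ip (\<lambda>x. \<Sum>j\<in>F. a' j * g j x) (\<lambda>x. \<Sum>j\<in>F. a' j * g j x) =
          ip (\<lambda>x. \<Sum>j\<in>insert i0 F. a j * g j x) (\<lambda>x. \<Sum>j\<in>insert i0 F. a j * g j x)"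
        by (intro ip_cong) (use eqw in auto)
      show "\<exists>c. (\<forall>x\<in>{0..1}. (\<Sum>j\<in>insert i0 F. c j * g j x) = (\<Sum>j\<in>insert i0 F. a j * g j x)) \<and>
           (\<Sum>j\<in>insert i0 F. (c j)\<^sup>2) \<le> K0 * ip (\<lambda>x. \<Sum>j\<in>insert i0 F. a j * g j x) (\<lambda>x. \<Sum>j\<in>insert i0 F. a j * g j x)"
        by (rule exI[of _ c]) (use s1 s2 c'1 c'2 eqw ipeq in auto)
    qed
  next
    case False
    define G where "G = ip g' g'"
    have G0: "G > 0" using False ip_nonneg[of g'] unfolding G_def by linarith
    define K where "K = max ((1 + 2 * D) / G) (2 * K0)"
    show ?thesis
    proof (rule exI[of _ K], intro conjI allI)
      show "K \<ge> 0" unfolding K_def using K0 by auto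
      fix a :: "'i \<Rightarrow> real"
      define a0 where "a0 = a i0"
      define a' where "a' = (\<lambda>j. a j + a0 * d j)"
      define u where "u = (\<lambda>x. \<Sum>j\<in>F. a' j * g j x)"
      define w where "w = (\<lambda>x. \<Sum>j\<in>insert i0 F. a j * g j x)"
      have wu: "w = (\<lambda>x. a0 * g' x + u x)"
        unfolding w_def u_def g'_def a'_def a0_def using insert(1,2)
        by (auto simp: algebra_simps sum.distrib sum_distrib_left sum_subtractf)
      have Lu: "L2 u" unfolding u_def using gF insert(1) by (intro L2_sum) auto
      have ipw: "ip w w = a0\<^sup>2 * G + ip u u"
      proof -
        have L1: "L2 (\<lambda>x. a0 * g' x)" using Lg' by (rule L2_scale)
        have L3: "L2 (\<lambda>x. a0 * g' x + u x)" using L1 Lu by (rule L2_add)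
        have "ip w w = ip (\<lambda>x. a0 * g' x) (\<lambda>x. a0 * g' x + u x) + ip u (\<lambda>x. a0 * g' x + u x)"
          unfolding wu using L1 Lu L3 by (rule ip_add)
        also have "ip (\<lambda>x. a0 * g' x) (\<lambda>x. a0 * g' x + u x) = a0 * (a0 * G + ip g' u)"
          using L1 Lu Lg' by (simp add: ip_scale, subst ip_sym, subst ip_add) (auto simp: ip_scale ip_sym G_def)
        also have "ip u (\<lambda>x. a0 * g' x + u x) = a0 * ip g' u + ip u u"
          using L1 Lu Lg' by (subst ip_sym, subst ip_add) (auto simp: ip_scale ip_sym)
        also have "ip g' u = 0" unfolding u_def by (rule g'orth)
        finally show ?thesis by (simp add: power2_eq_square)
      qed
      obtain c' where c'1: "\<forall>x\<in>{0..1}. (\<Sum>j\<in>F. c' j * g j x) = u x"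
        and c'2: "(\<Sum>j\<in>F. (c' j)\<^sup>2) \<le> K0 * ip u u"
        using K0b unfolding u_def by blast
      define c where "c = (\<lambda>j. if j = i0 then a0 else c' j - a0 * d j)"
      have s1: "(\<Sum>j\<in>insert i0 F. c j * g j x) = w x" if "x \<in> {0..1}" for x
      proof -
        have "(\<Sum>j\<in>insert i0 F. c j * g j x) = a0 * g i0 x + (\<Sum>j\<in>F. (c' j - a0 * d j) * g j x)"
          using insert(1,2) unfolding c_def by (simp, intro sum.cong) auto
        also have "\<dots> = a0 * g' x + (\<Sum>j\<in>F. c' j * g j x)"
          unfolding g'_def by (simp add: algebra_simps sum_subtractf sum_distrib_left)
        also have "\<dots> = w x" using c'1 that wu by simp
        finally show ?thesis .
      qed
      have s2: "(\<Sum>j\<in>insert i0 F. (c j)\<^sup>2) \<le> K * ip w w"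
      proof -
        have "(\<Sum>j\<in>insert i0 F. (c j)\<^sup>2) = a0\<^sup>2 + (\<Sum>j\<in>F. (c' j - a0 * d j)\<^sup>2)"
          using insert(1,2) unfolding c_def by (simp, intro sum.cong) auto
        also have "\<dots> \<le> a0\<^sup>2 + (\<Sum>j\<in>F. 2 * (c' j)\<^sup>2 + 2 * a0\<^sup>2 * (d j)\<^sup>2)"
        proof -
          have "(x - y)\<^sup>2 \<le> 2 * x\<^sup>2 + 2 * y\<^sup>2" for x y :: real
            using zero_le_power2[of "x + y"] by (simp add: power2_eq_square algebra_simps)
          then show ?thesis by (intro add_left_mono sum_mono) (metis power_mult_distrib mult.assoc)
        qed
        also have "\<dots> = a0\<^sup>2 * (1 + 2 * D) + 2 * (\<Sum>j\<in>F. (c' j)\<^sup>2)"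
          by (simp add: sum.distrib D_def sum_distrib_left algebra_simps)
        also have "\<dots> \<le> a0\<^sup>2 * (1 + 2 * D) + 2 * (K0 * ip u u)" using c'2 by simp
        also have "\<dots> = ((1 + 2 * D) / G) * (a0\<^sup>2 * G) + (2 * K0) * ip u u" using G0 by simp
        also have "\<dots> \<le> K * (a0\<^sup>2 * G) + K * ip u u"
          unfolding K_def using G0 ip_nonneg[of u]
          by (intro add_mono mult_right_mono) auto
        also have "\<dots> = K * ip w w" using ipw by (simp add: algebra_simps)
        finally show ?thesis .
      qed
      show "\<exists>c. (\<forall>x\<in>{0..1}. (\<Sum>j\<in>insert i0 F. c j * g j x) = (\<Sum>j\<in>insert i0 F. a j * g j x)) \<and>
           (\<Sum>j\<in>insert i0 F. (c j)\<^sup>2) \<le> K * ip (\<lambda>x. \<Sum>j\<in>insert i0 F. a j * g j x) (\<lambda>x. \<Sum>j\<in>insert i0 F. a j * g j x)"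
        by (rule exI[of _ c]) (use s1 s2 in \<open>auto simp: w_def\<close>)
    qed
  qed
qed

lemma poly_ftc: "integral {0..1} (\<lambda>x. poly (pderiv C) x) = poly C 1 - poly C (0::real)"
proof -
  have "((\<lambda>x. poly (pderiv C) x) has_integral (poly C 1 - poly C 0)) {0..1::real}"
    by (rule fundamental_theorem_of_calculus)
       (auto intro!: has_field_derivative_at_within[OF poly_DERIV] simp flip: has_real_derivative_iff_has_vector_derivative)
  then show ?thesis by (rule integral_unique)
qed

lemma poly_integrable: "(\<lambda>x. poly C x) integrable_on {0..1::real}"
  by (intro integrable_continuous_interval continuous_intros)

lemma poly_ibp:
  fixes A B :: "real poly"
  shows "integral {0..1} (\<lambda>x. poly (pderiv A) x * poly B x) =
    poly A 1 * poly B 1 - poly A 0 * poly B 0 - integral {0..1} (\<lambda>x. poly A x * poly (pderiv B) x)"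
proof -
  have "integral {0..1} (\<lambda>x. poly (pderiv (A * B)) x) =
     integral {0..1} (\<lambda>x. poly (A * pderiv B) x + poly (B * pderiv A) x)"
    by (simp add: pderiv_mult)
  also have "\<dots> = integral {0..1} (\<lambda>x. poly (A * pderiv B) x) + integral {0..1} (\<lambda>x. poly (B * pderiv A) x)"
    by (rule integral_add) (rule poly_integrable)+
  finally have "poly A 1 * poly B 1 - poly A 0 * poly B 0 =
     integral {0..1} (\<lambda>x. poly A x * poly (pderiv B) x) + integral {0..1} (\<lambda>x. poly (pderiv A) x * poly B x)"
    by (simp add: poly_ftc mult.commute)
  then show ?thesis by simp
qed

lemma pderiv_factor:
  fixes R :: "real poly"
  shows "pderiv ([:-a,1:]^(Suc n) * R) = [:-a,1:]^n * (smult (of_nat (Suc n)) R + [:-a,1:] * pderiv R)"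
proof -
  have d: "pderiv [:-a,1:] = (1::real poly)" by (simp add: pderiv_pCons one_pCons)
  show ?thesis by (simp only: pderiv_mult pderiv_power_Suc d) (simp add: algebra_simps)
qed

lemma pderiv_iter_factor:
  fixes R :: "real poly"
  assumes "poly R a \<noteq> 0" "j \<le> n"
  shows "\<exists>Rj. (pderiv ^^ j) ([:-a,1:]^n * R) = [:-a,1:]^(n - j) * Rj \<and> poly Rj a \<noteq> 0"
  using assms(2)
proof (induction j)
  case 0 then show ?case using assms(1) by auto
next
  case (Suc j)
  then obtain Rj where Rj: "(pderiv ^^ j) ([:-a,1:]^n * R) = [:-a,1:]^(n - j) * Rj" "poly Rj a \<noteq> 0"
    by auto
  obtain m where m: "n - j = Suc m" using Suc.prems by (metis Suc_diff_Suc Suc_le_lessD)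
  have "(pderiv ^^ Suc j) ([:-a,1:]^n * R) = pderiv ([:-a,1:]^(Suc m) * Rj)" using Rj m by simp
  also have "\<dots> = [:-a,1:]^m * (smult (of_nat (Suc m)) Rj + [:-a,1:] * pderiv Rj)"
    by (rule pderiv_factor)
  moreover have "n - Suc j = m" using m by arith
  moreover have "poly (smult (of_nat (Suc m)) Rj + [:-a,1:] * pderiv Rj) a \<noteq> 0"
    using Rj(2) by simp
  ultimately show ?case
    by (intro exI[of _ "smult (of_nat (Suc m)) Rj + [:-a,1:] * pderiv Rj"]) simp
qed

definition Fp :: "nat \<Rightarrow> real poly" where
  "Fp k = [:0, 1:] ^ (k + 1) * [:1, -1:] ^ k"

lemma Fp_at0: "Fp k = [:-0,1:]^(k+1) * [:1,-1:]^k" unfolding Fp_def by simp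

lemma Fp_at1: "Fp k = [:-1,1:]^k * smult ((-1)^k) ([:0,1:]^(k+1))"
proof -
  have "[:1,-1:] = smult (-1) [:-1,1::real:]" by simp
  then have "[:1,-1:]^k = smult ((-1)^k) ([:-1,1::real:]^k)" by (simp add: smult_power[symmetric])
  then show ?thesis unfolding Fp_def by (simp add: algebra_simps)
qed

lemma Fp_deriv_0:
  assumes "j \<le> k + 1"
  shows "\<exists>R. (pderiv ^^ j) (Fp k) = [:-0,1:]^(k + 1 - j) * R \<and> poly R 0 \<noteq> 0"
  unfolding Fp_at0 by (rule pderiv_iter_factor) (use assms in auto)

lemma Fp_deriv_1:
  assumes "j \<le> k"
  shows "\<exists>R. (pderiv ^^ j) (Fp k) = [:-1,1:]^(k - j) * R \<and> poly R 1 \<noteq> 0"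
  unfolding Fp_at1 by (rule pderiv_iter_factor) (use assms in auto)

lemma Fp_deriv_vanish:
  assumes "j < k"
  shows "poly ((pderiv ^^ j) (Fp k)) 0 = 0" "poly ((pderiv ^^ j) (Fp k)) 1 = 0"
proof -
  obtain R where "(pderiv ^^ j) (Fp k) = [:-0,1:]^(k + 1 - j) * R" using Fp_deriv_0[of j k] assms by auto
  moreover have "k + 1 - j = Suc (k - j)" using assms by auto
  ultimately show "poly ((pderiv ^^ j) (Fp k)) 0 = 0" by simp
  obtain R where "(pderiv ^^ j) (Fp k) = [:-1,1:]^(k - j) * R" using Fp_deriv_1[of j k] assms by auto
  moreover have "k - j = Suc (k - j - 1)" using assms by auto
  ultimately show "poly ((pderiv ^^ j) (Fp k)) 1 = 0" by simp
qed

lemma psi_struct: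
  assumes "k \<ge> 1"
  shows "\<exists>Q. psi_poly k = -([:0,1:] * Q) \<and> poly Q 1 \<noteq> 0 \<and>
           (pderiv ^^ (k - 1)) (Fp k) = ([:0,1:] * [:1,-1:]) * psi_poly k"
proof -
  define P where "P = (pderiv ^^ (k - 1)) (Fp k)"
  have "k - 1 \<le> k + 1" by simp
  from Fp_deriv_0[OF this] obtain R0 where R0: "P = [:-0,1:]^(k + 1 - (k - 1)) * R0"
    unfolding P_def by blast
  have e2: "k + 1 - (k - 1) = 2" using assms by auto
  obtain R1 where R1: "P = [:-1,1:]^(k - (k - 1)) * R1" "poly R1 1 \<noteq> 0"
    using Fp_deriv_1[of "k - 1" k] unfolding P_def by auto
  have e1: "k - (k - 1) = 1" using assms by auto
  have "poly P 1 = 0" unfolding P_def using Fp_deriv_vanish[of "k - 1" k] assms by auto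
  then have "poly R0 1 = 0" using R0 e2 by simp
  then obtain Q where Q: "R0 = [:-1,1:] * Q" using poly_eq_0_iff_dvd[of R0 1] by (auto elim: dvdE)
  have "[:-1,1:] * R1 = [:-1,1:] * ([:0,1:]^2 * Q)"
    using R0 R1(1) e1 e2 Q by (simp add: algebra_simps)
  moreover have nz1: "[:-1,1::real:] \<noteq> 0" by simp
  ultimately have "R1 = [:0,1:]^2 * Q" using mult_left_cancel[OF nz1] by blast
  then have Q1: "poly Q 1 \<noteq> 0" using R1(2) by simp
  have neg: "- [:1,-1::real:] = [:-1,1:]" by simp
  have "([:0,1:] * [:1,-1:]) * (-([:0,1:] * Q)) = [:0,1:] * [:0,1:] * (- [:1,-1::real:]) * Q"
    by (simp only: mult_minus_right mult_minus_left mult_ac)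
  also have "\<dots> = [:0,1:]^2 * ([:-1,1:] * Q)" by (simp only: neg power2_eq_square mult_ac)
  finally have Peq: "P = ([:0,1:] * [:1,-1:]) * (-([:0,1:] * Q))"
    using R0 e2 Q by simp
  have nz: "[:0,1:] * [:1,-1::real:] \<noteq> 0" by simp
  have "psi_poly k = -([:0,1:] * Q)"
    unfolding psi_poly_def Fp_def[symmetric] P_def[symmetric] Peq
    using nz by (rule nonzero_mult_div_cancel_left)
  then show ?thesis using Q1 Peq unfolding P_def by auto
qed

lemma psi_0: "k \<ge> 1 \<Longrightarrow> psi k 0 = 0"
  using psi_struct[of k] unfolding psi_def by auto

lemma psi_1: "k \<ge> 1 \<Longrightarrow> psi k 1 \<noteq> 0"
  using psi_struct[of k] unfolding psi_def by auto

lemma degree_pderiv_iter: "degree ((pderiv ^^ j) p) = degree (p::real poly) - j"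
  by (induction j) (auto simp: degree_pderiv)

lemma degree_Fp: "degree (Fp k) \<le> 2 * k + 1"
proof -
  have "degree (Fp k) \<le> degree ([:0,1::real:] ^ (k + 1)) + degree ([:1,-1::real:] ^ k)"
    unfolding Fp_def by (rule degree_mult_le)
  also have "\<dots> \<le> 1 * (k + 1) + 1 * k"
    by (intro add_mono order.trans[OF degree_power_le]) auto
  finally show ?thesis by simp
qed

lemma psi_deg: assumes "k \<ge> 1" shows "degree (psi_poly k) \<le> k"
proof (cases "psi_poly k = 0")
  case True then show ?thesis by simp
next
  case False
  obtain Q where Q: "(pderiv ^^ (k - 1)) (Fp k) = ([:0,1:] * [:1,-1:]) * psi_poly k"
    using psi_struct[OF assms] by auto
  have "degree ((pderiv ^^ (k - 1)) (Fp k)) \<le> k + 2"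
    using degree_Fp[of k] unfolding degree_pderiv_iter by arith
  moreover have "degree (([:0,1:] * [:1,-1:]) * psi_poly k) = 2 + degree (psi_poly k)"
    using False by (subst degree_mult_eq) (auto simp: degree_mult_eq)
  ultimately show ?thesis using Q by simp
qed

lemma ibp_iter:
  assumes "m \<le> k" "degree t < m"
  shows "integral {0..1} (\<lambda>x. poly ((pderiv ^^ m) (Fp k)) x * poly t x) = 0"
  using assms
proof (induction m arbitrary: t)
  case 0 then show ?case by simp
next
  case (Suc m)
  define A where "A = (pderiv ^^ m) (Fp k)"
  have A0: "poly A 0 = 0" "poly A 1 = 0" unfolding A_def using Fp_deriv_vanish[of m k] Suc.prems by auto
  have "integral {0..1} (\<lambda>x. poly ((pderiv ^^ Suc m) (Fp k)) x * poly t x) =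
        - integral {0..1} (\<lambda>x. poly A x * poly (pderiv t) x)"
    using poly_ibp[of A t] A0 by (simp add: A_def)
  also have "integral {0..1} (\<lambda>x. poly A x * poly (pderiv t) x) = 0"
  proof (cases m)
    case 0
    then have "pderiv t = 0" using Suc.prems by (simp add: pderiv_eq_0_iff)
    then show ?thesis by simp
  next
    case (Suc m')
    have "degree (pderiv t) < m" using Suc.prems Suc by (simp add: degree_pderiv)
    then show ?thesis unfolding A_def using Suc.IH Suc.prems by simp
  qed
  finally show ?case by simp
qed

lemma psi_orth:
  assumes "k \<ge> 1" "degree s \<le> k" "poly s 0 = 0" "poly s 1 = 0"
  shows "integral {0..1} (\<lambda>x. psi k x * poly s x) = 0"
proof -
  obtain s1 where s1: "s = [:-0,1:] * s1" using assms(3) poly_eq_0_iff_dvd[of s 0] by (auto elim: dvdE)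
  have "poly s1 1 = 0" using assms(4) s1 by simp
  then obtain t where t: "s1 = [:-1,1:] * t" using poly_eq_0_iff_dvd[of s1 1] by (auto elim: dvdE)
  have neg: "- [:1,-1::real:] = [:-1,1:]" by simp
  have "- (([:0,1:] * [:1,-1:]) * t) = [:0,1:] * ((- [:1,-1::real:]) * t)"
    by (simp only: mult_minus_right mult_minus_left mult_ac)
  then have s_eq: "s = - (([:0,1:] * [:1,-1:]) * t)" using s1 t by (simp only: neg) simp
  have P: "(pderiv ^^ (k - 1)) (Fp k) = ([:0,1:] * [:1,-1:]) * psi_poly k"
    using psi_struct[OF assms(1)] by auto
  have pt: "psi k x * poly s x = - (poly ((pderiv ^^ (k - 1)) (Fp k)) x * poly t x) / fact k" for x
    unfolding psi_def s_eq P by (simp add: field_simps)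
  show ?thesis
  proof (cases "t = 0")
    case True then show ?thesis using s_eq by simp
  next
    case False
    have "degree s = 2 + degree t" unfolding s_eq using False
      by (subst degree_minus, subst degree_mult_eq) (auto simp: degree_mult_eq)
    then have "degree t < k - 1" using assms(2) by arith
    then have "integral {0..1} (\<lambda>x. poly ((pderiv ^^ (k - 1)) (Fp k)) x * poly t x) = 0"
      by (intro ibp_iter) auto
    then show ?thesis unfolding pt by (simp add: integral_divide_zero)
  qed
qed

lemma integral_affine01:
  fixes F :: "real \<Rightarrow> real"
  assumes "continuous_on UNIV F" "c > 0"
  shows "integral {a..a+c} F = c * integral {0..1} (\<lambda>t. F (a + c * t))"
proof -
  have "(F has_integral integral {a..a+c} F) {a..a+c}"
    using assms(2) by (intro integrable_integral integrable_continuous_interval continuous_on_subset[OF assms(1)]) auto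
  then have "(F has_integral integral {a..a+c} F) (cbox a (a+c))" by (simp add: cbox_interval)
  from has_integral_affinity'[OF this assms(2), of a]
  have "((\<lambda>x. F (c * x + a)) has_integral (inverse c * integral {a..a+c} F)) {0..1}"
    using assms(2) by (simp add: cbox_interval)
  then have "integral {0..1} (\<lambda>t. F (a + c * t)) = inverse c * integral {a..a+c} F"
    by (simp add: integral_unique add.commute)
  then show ?thesis using assms(2) by simp
qed

lemma integral_flip01:
  fixes G :: "real \<Rightarrow> real"
  assumes "continuous_on UNIV G"
  shows "integral {0..1} (\<lambda>t. G (1 - t)) = integral {0..1} G"
proof -
  have "integral {-1..-0} (\<lambda>x. G (1 - (- x))) = integral {0..1} (\<lambda>t. G (1 - t))"
    using Henstock_Kurzweil_Integration.integral_reflect_real[of 1 0 "\<lambda>t. G (1 - t)"] by simp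
  then have e1: "integral {0..1} (\<lambda>t. G (1 - t)) = integral {-1..0} (\<lambda>x. G (1 + x))" by simp
  have "(G has_integral integral {0..1} G) {0..1}"
    by (intro integrable_integral integrable_continuous_interval continuous_on_subset[OF assms(1)]) auto
  then have "(G has_integral integral {0..1} G) (cbox 0 1)" by (simp add: cbox_interval)
  from has_integral_affinity'[OF this, of 1 1]
  have "((\<lambda>x. G (x + 1)) has_integral integral {0..1} G) {-1..0}"
    by (simp add: cbox_interval)
  then have "integral {-1..0} (\<lambda>x. G (1 + x)) = integral {0..1} G"
    by (simp add: integral_unique add.commute)
  then show ?thesis using e1 by simp
qed

lemma integral_split_nodes:
  fixes f :: "real \<Rightarrow> real"
  assumes "continuous_on UNIV f" "N \<ge> 1"
  shows "integral {0..node N (int n)} f = (\<Sum>j\<in>{1..n}. integral {node N (int j - 1)..node N (int j)} f)"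
proof (induction n)
  case 0 then show ?case by (simp add: node_def)
next
  case (Suc n)
  have le: "node N (int n) \<le> node N (int (Suc n))" "0 \<le> node N (int n)"
    using assms(2) by (auto simp: node_def divide_right_mono)
  have "integral {0..node N (int n)} f + integral {node N (int n)..node N (int (Suc n))} f =
        integral {0..node N (int (Suc n))} f"
    using le by (intro Henstock_Kurzweil_Integration.integral_combine integrable_continuous_interval continuous_on_subset[OF assms(1)]) auto
  then show ?case using Suc by simp
qed

lemma integral_split01:
  fixes f :: "real \<Rightarrow> real"
  assumes "continuous_on UNIV f" "N \<ge> 1"
  shows "integral {0..1} f = (\<Sum>j\<in>{1..N}. integral {node N (int j - 1)..node N (int j)} f)"
  using integral_split_nodes[OF assms, of N] assms(2) by (simp add: node_def)

definition per :: "(real \<Rightarrow> real) \<Rightarrow> real \<Rightarrow> real" where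
  "per f x = infsum (\<lambda>n::int. f (x - of_int n)) UNIV"

definition supp02 :: "(real \<Rightarrow> real) \<Rightarrow> bool" where
  "supp02 f \<longleftrightarrow> (\<forall>t. t \<le> 0 \<or> t \<ge> 2 \<longrightarrow> f t = 0)"

lemma per_local:
  assumes "supp02 f" "dist x x0 < 1"
  shows "per f x = (\<Sum>n\<in>{\<lfloor>x0\<rfloor> - 3..\<lfloor>x0\<rfloor> + 2}. f (x - of_int n))"
proof -
  have "per f x = infsum (\<lambda>n::int. f (x - of_int n)) {\<lfloor>x0\<rfloor> - 3..\<lfloor>x0\<rfloor> + 2}"
    unfolding per_def
  proof (rule infsum_cong_neutral)
    fix n :: int assume n: "n \<in> UNIV - {\<lfloor>x0\<rfloor> - 3..\<lfloor>x0\<rfloor> + 2}"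
    have "x - of_int n \<le> 0 \<or> x - of_int n \<ge> 2"
    proof (cases "n < \<lfloor>x0\<rfloor> - 3")
      case True
      then have "of_int n \<le> of_int \<lfloor>x0\<rfloor> - (4::real)" by linarith
      then show ?thesis using assms(2) of_int_floor_le[of x0] unfolding dist_real_def by linarith
    next
      case False
      then have "n > \<lfloor>x0\<rfloor> + 2" using n by auto
      then have "of_int n \<ge> of_int \<lfloor>x0\<rfloor> + (3::real)" by linarith
      then show ?thesis using assms(2) real_of_int_floor_add_one_gt[of x0] unfolding dist_real_def by linarith
    qed
    then show "f (x - of_int n) = 0" using assms(1) unfolding supp02_def by blast
  qed auto
  then show ?thesis by simp
qed

lemma per_cont:
  assumes "continuous_on UNIV f" "supp02 f"
  shows "continuous_on UNIV (per f)"
  unfolding continuous_on_eq_continuous_at[OF open_UNIV]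
proof
  fix x0 :: real
  let ?T = "{\<lfloor>x0\<rfloor> - 3..\<lfloor>x0\<rfloor> + 2}"
  have ev: "eventually (\<lambda>x. per f x = (\<Sum>n\<in>?T. f (x - of_int n))) (nhds x0)"
    unfolding eventually_nhds_metric using per_local[OF assms(2)] by (intro exI[of _ 1]) auto
  have c: "continuous_on UNIV (\<lambda>x. f (x - of_int n))" for n :: int
    by (rule continuous_on_compose2[OF assms(1)]) (auto intro!: continuous_intros)
  have "continuous_on UNIV (\<lambda>x. \<Sum>n\<in>?T. f (x - of_int n))"
    by (intro continuous_on_sum c)
  then have "isCont (\<lambda>x. \<Sum>n\<in>?T. f (x - of_int n)) x0"
    using continuous_on_eq_continuous_at[OF open_UNIV] by blast
  then show "isCont (per f) x0" using isCont_cong[OF ev] by blast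
qed

lemma per_periodic: "per f (x + 1) = per f x"
proof -
  have "bij_betw (\<lambda>n::int. n + 1) UNIV UNIV"
    by (rule bij_betwI[of _ _ _ "\<lambda>n. n - 1"]) auto
  from infsum_reindex_bij_betw[OF this, of "\<lambda>n. f (x + 1 - of_int n)"]
  show ?thesis unfolding per_def by simp
qed

lemma per_01:
  assumes "supp02 f" "x \<in> {0..1}"
  shows "per f x = f x + f (x + 1)"
proof -
  have "per f x = infsum (\<lambda>n::int. f (x - of_int n)) {0, -1}"
    unfolding per_def
  proof (rule infsum_cong_neutral)
    fix n :: int assume n: "n \<in> UNIV - {0, -1}"
    then have "n \<ge> 1 \<or> n \<le> -2" by auto
    moreover have "n \<ge> 1 \<Longrightarrow> real_of_int n \<ge> 1" "n \<le> -2 \<Longrightarrow> real_of_int n \<le> -2" by simp_all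
    ultimately have "x - of_int n \<le> 0 \<or> x - of_int n \<ge> 2" using assms(2) by auto
    then show "f (x - of_int n) = 0" using assms(1) unfolding supp02_def by blast
  qed auto
  then show ?thesis by (simp add: add.commute)
qed

lemma periodic_int:
  assumes "periodic1 f" shows "f (x + of_int m) = f x"
proof -
  have pos: "f (x + of_nat n) = f x" for x n
    by (induction n arbitrary: x) (use assms in \<open>auto simp: periodic1_def add.assoc[symmetric]\<close>)
  show ?thesis
  proof (cases "m \<ge> 0")
    case True
    then show ?thesis using pos[of x "nat m"] by simp
  next
    case False
    have "f (x + of_int m + of_nat (nat (-m))) = f (x + of_int m)" by (rule pos)
    moreover have "x + of_int m + of_nat (nat (-m)) = x" using False by simp
    ultimately show ?thesis by simp
  qed
qed

lemma ell_loc_closed: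
  assumes "N \<ge> 1" "k \<ge> 1"
  shows "ell_loc k N t = psi k (max 0 (1 - \<bar>t * real N\<bar>))"
proof -
  have N: "real N > 0" using assms by simp
  have p0: "psi k 0 = 0" using psi_0[OF assms(2)] .
  define s where "s = t * real N"
  have t: "t = s / real N" using N unfolding s_def by simp
  have c1: "(- (1 / real N) \<le> t) = (-1 \<le> s)" "(t \<le> 0) = (s \<le> 0)" "(0 < t) = (0 < s)"
       "(t \<le> 1 / real N) = (s \<le> 1)"
    unfolding t using N by (auto simp: field_simps)
  have c2: "(t + 1 / real N) / (1 / real N) = s + 1" "(1 / real N - t) / (1 / real N) = 1 - s"
    unfolding t using N by (auto simp: field_simps)
  show ?thesis
    unfolding ell_loc_def Let_def c1 c2 s_def[symmetric]
    using p0 by (auto simp: max_def add.commute)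
qed

lemma q_loc_closed:
  assumes "N \<ge> 1"
  shows "q_loc k N \<nu> t = phi k \<nu> (max 0 (min 1 (t * real N)))"
proof -
  have N: "real N > 0" using assms by simp
  define s where "s = t * real N"
  have t: "t = s / real N" using N unfolding s_def by simp
  have c1: "(0 \<le> t) = (0 \<le> s)" "(t \<le> 1 / real N) = (s \<le> 1)" "t / (1 / real N) = s"
    unfolding t using N by (auto simp: field_simps)
  have p0: "phi k \<nu> 0 = 0" "phi k \<nu> 1 = 0" by (simp_all add: phi_def)
  show ?thesis
    unfolding q_loc_def Let_def c1 s_def[symmetric]
    using p0 by (auto simp: max_def min_def)
qed

lemma node_scale: "N \<ge> 1 \<Longrightarrow> (x - node N m) * real N = x * real N - of_int m"
  by (simp add: node_def field_simps)

lemma node_bounds: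
  assumes "N \<ge> 1" "x \<in> {node N (j - 1)..node N j}"
  shows "of_int j - 1 \<le> x * real N" "x * real N \<le> of_int j"
proof -
  have N: "real N > 0" using assms by simp
  from assms(2) have "(of_int j - 1) / real N \<le> x" "x \<le> of_int j / real N" by (auto simp: node_def)
  then show "of_int j - 1 \<le> x * real N" "x * real N \<le> of_int j" using N by (auto simp: field_simps)
qed

lemma ell_loc_local:
  assumes "N \<ge> 1" "k \<ge> 1" "x \<in> {node N (j - 1)..node N j}"
  shows "ell_loc k N (x - node N m) =
    (if m = j then psi k (x * real N - (of_int j - 1)) else if m = j - 1 then psi k (of_int j - x * real N) else 0)"
proof -
  define y where "y = x * real N"
  have y: "of_int j - 1 \<le> y" "y \<le> of_int j" using node_bounds[OF assms(1,3)] unfolding y_def by auto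
  have e: "ell_loc k N (x - node N m) = psi k (max 0 (1 - \<bar>y - of_int m\<bar>))"
    unfolding ell_loc_closed[OF assms(1,2)] node_scale[OF assms(1)] y_def ..
  have p0: "psi k 0 = 0" using psi_0[OF assms(2)] .
  consider "m = j" | "m = j - 1" | "m \<ge> j + 1" | "m \<le> j - 2" by linarith
  then show ?thesis
  proof cases
    case 1 then show ?thesis unfolding e y_def[symmetric] using y by (auto simp: max_def algebra_simps)
  next
    case 2 then show ?thesis unfolding e y_def[symmetric] using y by (auto simp: max_def)
  next
    case 3
    then have "real_of_int m \<ge> of_int j + 1" by linarith
    then have "max 0 (1 - \<bar>y - of_int m\<bar>) = 0" using y by auto
    then show ?thesis unfolding e using 3 p0 by auto
  next
    case 4
    then have "real_of_int m \<le> of_int j - 2" by linarith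
    then have "max 0 (1 - \<bar>y - of_int m\<bar>) = 0" using y by auto
    then show ?thesis unfolding e using 4 p0 by auto
  qed
qed

lemma q_loc_local:
  assumes "N \<ge> 1" "x \<in> {node N (j - 1)..node N j}"
  shows "q_loc k N \<nu> (x - node N m) = (if m = j - 1 then phi k \<nu> (x * real N - (of_int j - 1)) else 0)"
proof -
  define y where "y = x * real N"
  have y: "of_int j - 1 \<le> y" "y \<le> of_int j" using node_bounds[OF assms(1,2)] unfolding y_def by auto
  have e: "q_loc k N \<nu> (x - node N m) = phi k \<nu> (max 0 (min 1 (y - of_int m)))"
    unfolding q_loc_closed[OF assms(1)] node_scale[OF assms(1)] y_def ..
  have p0: "phi k \<nu> 0 = 0" "phi k \<nu> 1 = 0" by (simp_all add: phi_def)
  consider "m = j - 1" | "m \<ge> j" | "m \<le> j - 2" by linarith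
  then show ?thesis
  proof cases
    case 1 then show ?thesis unfolding e y_def[symmetric] using y by (auto simp: max_def min_def)
  next
    case 2
    then have "real_of_int m \<ge> of_int j" by linarith
    then have "max 0 (min 1 (y - of_int m)) = 0" using y by auto
    then show ?thesis unfolding e using 2 p0 by auto
  next
    case 3
    then have "real_of_int m \<le> of_int j - 2" by linarith
    then have "max 0 (min 1 (y - of_int m)) = 1" using y by auto
    then show ?thesis unfolding e using 3 p0 by auto
  qed
qed

lemma ell_per: "ell k N i = per (\<lambda>t. ell_loc k N (t - node N (int i)))"
  by (rule ext) (simp add: ell_def per_def diff_diff_eq add.commute)

lemma q_per: "q k N i \<nu> = per (\<lambda>t. q_loc k N \<nu> (t - node N (int i - 1)))"
  by (rule ext) (simp add: q_def per_def diff_diff_eq add.commute)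

lemma ell_supp:
  assumes "N \<ge> 1" "k \<ge> 1" "i \<in> {1..N}"
  shows "supp02 (\<lambda>t. ell_loc k N (t - node N (int i)))"
  unfolding supp02_def
proof (intro allI impI)
  fix t :: real assume t: "t \<le> 0 \<or> t \<ge> 2"
  have N: "real N \<ge> 1" using assms by simp
  have i: "1 \<le> real i" "real i \<le> real N" using assms by auto
  have "\<bar>t * real N - real i\<bar> \<ge> 1"
  proof (cases "t \<le> 0")
    case True
    then have "t * real N \<le> 0" using N by (simp add: mult_nonpos_nonneg)
    then show ?thesis using i by linarith
  next
    case False
    then have "t \<ge> 2" using t by auto
    then have "t * real N \<ge> 2 * real N" using N by (intro mult_right_mono) auto
    then show ?thesis using i N by linarith
  qed
  then show "ell_loc k N (t - node N (int i)) = 0"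
    unfolding ell_loc_closed[OF assms(1,2)] node_scale[OF assms(1)] using psi_0[OF assms(2)]
    by (simp add: max_def)
qed

lemma q_supp:
  assumes "N \<ge> 1" "i \<in> {1..N}"
  shows "supp02 (\<lambda>t. q_loc k N \<nu> (t - node N (int i - 1)))"
  unfolding supp02_def
proof (intro allI impI)
  fix t :: real assume t: "t \<le> 0 \<or> t \<ge> 2"
  have N: "real N \<ge> 1" using assms by simp
  have i: "1 \<le> real i" "real i \<le> real N" using assms by auto
  have "t * real N - (real i - 1) \<le> 0 \<or> t * real N - (real i - 1) \<ge> 1"
  proof (cases "t \<le> 0")
    case True
    then have "t * real N \<le> 0" using N by (simp add: mult_nonpos_nonneg)
    then show ?thesis using i by linarith
  next
    case False
    then have "t \<ge> 2" using t by auto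
    then have "t * real N \<ge> 2 * real N" using N by (intro mult_right_mono) auto
    then show ?thesis using i N by linarith
  qed
  then show "q_loc k N \<nu> (t - node N (int i - 1)) = 0"
    unfolding q_loc_closed[OF assms(1)] node_scale[OF assms(1)]
    by (auto simp: max_def min_def phi_def)
qed

lemma psi_cont: "continuous_on UNIV f \<Longrightarrow> continuous_on UNIV (\<lambda>x. psi k (f x))"
  unfolding psi_def by (intro continuous_intros) auto

lemma phi_cont: "continuous_on UNIV f \<Longrightarrow> continuous_on UNIV (\<lambda>x. phi k \<nu> (f x))"
  unfolding phi_def by (intro continuous_intros) auto

lemma ell_cont:
  assumes "N \<ge> 1" "k \<ge> 1" "i \<in> {1..N}"
  shows "continuous_on UNIV (ell k N i)"
  unfolding ell_per
proof (rule per_cont[OF _ ell_supp[OF assms]])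
  show "continuous_on UNIV (\<lambda>t. ell_loc k N (t - node N (int i)))"
    unfolding ell_loc_closed[OF assms(1,2)] by (intro psi_cont continuous_intros)
qed

lemma q_cont:
  assumes "N \<ge> 1" "i \<in> {1..N}"
  shows "continuous_on UNIV (q k N i \<nu>)"
  unfolding q_per
proof (rule per_cont[OF _ q_supp[OF assms]])
  show "continuous_on UNIV (\<lambda>t. q_loc k N \<nu> (t - node N (int i - 1)))"
    unfolding q_loc_closed[OF assms(1)] by (intro phi_cont continuous_intros)
qed

lemma ell_periodic: "periodic1 (ell k N i)"
  unfolding periodic1_def ell_per by (simp add: per_periodic)

lemma q_periodic: "periodic1 (q k N i \<nu>)"
  unfolding periodic1_def q_per by (simp add: per_periodic)

lemma Ij_sub01:
  assumes "N \<ge> 1" "j \<in> {1..N}" "x \<in> {node N (int j - 1)..node N (int j)}"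
  shows "x \<in> {0..1}"
proof -
  have N: "real N > 0" using assms by simp
  have "0 \<le> node N (int j - 1)" "node N (int j) \<le> 1" using assms N by (auto simp: node_def)
  then show ?thesis using assms(3) by auto
qed

lemma ell_01:
  assumes "N \<ge> 1" "k \<ge> 1" "i \<in> {1..N}" "j \<in> {1..N}" "x \<in> {node N (int j - 1)..node N (int j)}"
  shows "ell k N i x = (if i = j then psi k (x * real N - (real j - 1)) else 0) +
     (if int i = int j - 1 \<or> (i = N \<and> j = 1) then psi k (real j - x * real N) else 0)"
proof -
  have x01: "x \<in> {0..1}" using Ij_sub01[OF assms(1,4,5)] .
  have "ell k N i x = ell_loc k N (x - node N (int i)) + ell_loc k N (x + 1 - node N (int i))"
    unfolding ell_per using per_01[OF ell_supp[OF assms(1-3)] x01] by simp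
  also have "x + 1 - node N (int i) = x - node N (int i - int N)"
    using assms(1) by (simp add: node_def field_simps)
  finally have e: "ell k N i x = ell_loc k N (x - node N (int i)) + ell_loc k N (x - node N (int i - int N))" .
  have l1: "ell_loc k N (x - node N (int i)) = (if i = j then psi k (x * real N - (real j - 1)) else 0) +
     (if int i = int j - 1 then psi k (real j - x * real N) else 0)"
    using ell_loc_local[OF assms(1,2), of x "int j" "int i"] assms(5) by auto
  have l2: "ell_loc k N (x - node N (int i - int N)) = (if i = N \<and> j = 1 then psi k (real j - x * real N) else 0)"
    using ell_loc_local[OF assms(1,2), of x "int j" "int i - int N"] assms by auto
  show ?thesis unfolding e l1 l2 using assms(3,4) by auto
qed

lemma q_01:
  assumes "N \<ge> 1" "i \<in> {1..N}" "j \<in> {1..N}" "x \<in> {node N (int j - 1)..node N (int j)}"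
  shows "q k N i \<nu> x = (if i = j then phi k \<nu> (x * real N - (real j - 1)) else 0)"
proof -
  have x01: "x \<in> {0..1}" using Ij_sub01[OF assms(1,3,4)] .
  have "q k N i \<nu> x = q_loc k N \<nu> (x - node N (int i - 1)) + q_loc k N \<nu> (x + 1 - node N (int i - 1))"
    unfolding q_per using per_01[OF q_supp[OF assms(1,2)] x01] by simp
  also have "x + 1 - node N (int i - 1) = x - node N (int i - 1 - int N)"
    using assms(1) by (simp add: node_def field_simps)
  finally have e: "q k N i \<nu> x = q_loc k N \<nu> (x - node N (int i - 1)) + q_loc k N \<nu> (x - node N (int i - 1 - int N))" .
  have l1: "q_loc k N \<nu> (x - node N (int i - 1)) = (if i = j then phi k \<nu> (x * real N - (real j - 1)) else 0)"
    using q_loc_local[OF assms(1), of x "int j" k \<nu> "int i - 1"] assms(4) by auto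
  have l2: "q_loc k N \<nu> (x - node N (int i - 1 - int N)) = 0"
    using q_loc_local[OF assms(1), of x "int j" k \<nu> "int i - 1 - int N"] assms by auto
  show ?thesis unfolding e l1 l2 by simp
qed

lemma psi_affine:
  assumes "k \<ge> 1"
  shows "\<exists>P. degree P \<le> k \<and> (\<forall>x. psi k (a + b * x) = poly P x)"
proof (intro exI conjI allI)
  let ?P = "smult (1 / fact k) (pcompose (psi_poly k) [:a, b:])"
  show "psi k (a + b * x) = poly ?P x" for x by (simp add: psi_def poly_pcompose mult.commute)
  have "degree (pcompose (psi_poly k) [:a, b:]) \<le> degree (psi_poly k) * degree [:a, b:]"
    by (rule degree_pcompose_le)
  also have "\<dots> \<le> k * 1" using psi_deg[OF assms] by (intro mult_mono) auto
  finally show "degree ?P \<le> k" by simp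
qed

definition phi_poly :: "nat \<Rightarrow> nat \<Rightarrow> real poly" where
  "phi_poly k \<nu> = [:0,1:] * [:1,-1:] * smult (real ((k - 2) choose (\<nu> - 1))) ([:0,1:]^(\<nu> - 1) * [:1,-1:]^(k - 1 - \<nu>))"

lemma poly_phi_poly: "poly (phi_poly k \<nu>) x = phi k \<nu> x"
proof -
  have a: "poly [:0,1:] x = x" "poly [:1,-1:] x = 1 - x" by simp_all
  show ?thesis unfolding phi_poly_def phi_def poly_mult poly_smult poly_power a by (simp only: mult_ac)
qed

lemma degree_phi_poly: assumes "1 \<le> \<nu>" "\<nu> \<le> k - 1" shows "degree (phi_poly k \<nu>) \<le> k"
proof -
  have "degree (phi_poly k \<nu>) \<le> degree ([:0,1::real:] * [:1,-1:]) +
     degree (smult (real ((k - 2) choose (\<nu> - 1))) ([:0,1::real:]^(\<nu> - 1) * [:1,-1:]^(k - 1 - \<nu>)))"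
    unfolding phi_poly_def by (rule degree_mult_le)
  also have "\<dots> \<le> 2 + ((\<nu> - 1) + (k - 1 - \<nu>))"
  proof (intro add_mono)
    show "degree ([:0,1::real:] * [:1,-1:]) \<le> 2"
      using degree_mult_le[of "[:0,1::real:]" "[:1,-1:]"] by simp
    have "degree ([:0,1::real:]^(\<nu> - 1) * [:1,-1:]^(k - 1 - \<nu>)) \<le> degree ([:0,1::real:]^(\<nu> - 1)) + degree ([:1,-1::real:]^(k - 1 - \<nu>))"
      by (rule degree_mult_le)
    also have "\<dots> \<le> 1 * (\<nu> - 1) + 1 * (k - 1 - \<nu>)"
      by (intro add_mono order.trans[OF degree_power_le]) auto
    finally show "degree (smult (real ((k - 2) choose (\<nu> - 1))) ([:0,1::real:]^(\<nu> - 1) * [:1,-1:]^(k - 1 - \<nu>))) \<le> (\<nu> - 1) + (k - 1 - \<nu>)"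
      using degree_smult_le order.trans by fastforce
  qed
  also have "\<dots> = k" using assms by arith
  finally show ?thesis .
qed

lemma phi_affine:
  assumes "1 \<le> \<nu>" "\<nu> \<le> k - 1"
  shows "\<exists>P. degree P \<le> k \<and> (\<forall>x. phi k \<nu> (a + b * x) = poly P x)"
proof (intro exI conjI allI)
  let ?P = "pcompose (phi_poly k \<nu>) [:a, b:]"
  show "phi k \<nu> (a + b * x) = poly ?P x" for x by (simp add: poly_phi_poly poly_pcompose mult.commute)
  have "degree ?P \<le> degree (phi_poly k \<nu>) * degree [:a, b:]"
    by (rule degree_pcompose_le)
  also have "\<dots> \<le> k * 1" using degree_phi_poly[OF assms] by (intro mult_mono) auto
  finally show "degree ?P \<le> k" by simp
qed

lemma Vh_zero: "(\<lambda>x. 0) \<in> Vh k N"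
  unfolding Vh_def periodic1_def by (auto intro!: exI[of _ 0])

lemma Vh_piece: "f \<in> Vh k N \<Longrightarrow> i \<in> {1..N} \<Longrightarrow>
   \<exists>p. degree p \<le> k \<and> (\<forall>x\<in>{node N (int i - 1)..node N (int i)}. f x = poly p x)"
  unfolding Vh_def by auto

lemma Vh_add: assumes "f \<in> Vh k N" "g \<in> Vh k N" shows "(\<lambda>x. f x + g x) \<in> Vh k N"
proof -
  have "\<exists>p. degree p \<le> k \<and> (\<forall>x\<in>{node N (int i - 1)..node N (int i)}. f x + g x = poly p x)"
    if iN: "i \<in> {1..N}" for i
  proof -
    obtain p1 where p1: "degree p1 \<le> k" "\<forall>x\<in>{node N (int i - 1)..node N (int i)}. f x = poly p1 x"
      using Vh_piece[OF assms(1) iN] by blast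
    obtain p2 where p2: "degree p2 \<le> k" "\<forall>x\<in>{node N (int i - 1)..node N (int i)}. g x = poly p2 x"
      using Vh_piece[OF assms(2) iN] by blast
    show ?thesis using p1 p2 by (intro exI[of _ "p1 + p2"]) (auto intro!: degree_add_le)
  qed
  moreover have "continuous_on UNIV (\<lambda>x. f x + g x)"
    using assms unfolding Vh_def by (intro continuous_on_add) auto
  moreover have "periodic1 (\<lambda>x. f x + g x)" using assms unfolding Vh_def periodic1_def by auto
  ultimately show ?thesis unfolding Vh_def by blast
qed

lemma Vh_scale: assumes "f \<in> Vh k N" shows "(\<lambda>x. c * f x) \<in> Vh k N"
proof -
  have "\<exists>p. degree p \<le> k \<and> (\<forall>x\<in>{node N (int i - 1)..node N (int i)}. c * f x = poly p x)"
    if iN: "i \<in> {1..N}" for i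
  proof -
    obtain p1 where p1: "degree p1 \<le> k" "\<forall>x\<in>{node N (int i - 1)..node N (int i)}. f x = poly p1 x"
      using Vh_piece[OF assms(1) iN] by blast
    show ?thesis using p1 by (intro exI[of _ "smult c p1"]) (auto intro: order.trans[OF degree_smult_le])
  qed
  moreover have "continuous_on UNIV (\<lambda>x. c * f x)"
    using assms unfolding Vh_def by (intro continuous_on_mult continuous_on_const) auto
  moreover have "periodic1 (\<lambda>x. c * f x)" using assms unfolding Vh_def periodic1_def by auto
  ultimately show ?thesis unfolding Vh_def by blast
qed

lemma Vh_diff: assumes "f \<in> Vh k N" "g \<in> Vh k N" shows "(\<lambda>x. f x - g x) \<in> Vh k N"
  using Vh_add[OF assms(1) Vh_scale[OF assms(2), of "-1"]] by simp

lemma Vh_sum: assumes "finite I" "\<And>i. i \<in> I \<Longrightarrow> g i \<in> Vh k N"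
  shows "(\<lambda>x. \<Sum>j\<in>I. c j * g j x) \<in> Vh k N"
  using assms
proof (induction I rule: finite_induct)
  case empty then show ?case by (simp add: Vh_zero)
next
  case (insert a F) then show ?case by (simp add: Vh_add Vh_scale)
qed

lemma Vh_cont: "f \<in> Vh k N \<Longrightarrow> continuous_on UNIV f"
  unfolding Vh_def by auto

lemma Vh_periodic: "f \<in> Vh k N \<Longrightarrow> periodic1 f"
  unfolding Vh_def by auto

lemma ell_Vh:
  assumes "N \<ge> 1" "k \<ge> 1" "i \<in> {1..N}"
  shows "ell k N i \<in> Vh k N"
  unfolding Vh_def
proof (intro CollectI conjI ballI)
  show "continuous_on UNIV (ell k N i)" by (rule ell_cont[OF assms])
  show "periodic1 (ell k N i)" by (rule ell_periodic)
  fix j assume j: "j \<in> {1..N}"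
  obtain P1 where P1: "degree P1 \<le> k" "\<forall>x. psi k (- (real j - 1) + real N * x) = poly P1 x"
    using psi_affine[OF assms(2)] by blast
  obtain P2 where P2: "degree P2 \<le> k" "\<forall>x. psi k (real j + (- real N) * x) = poly P2 x"
    using psi_affine[OF assms(2)] by blast
  let ?P = "(if i = j then P1 else 0) + (if int i = int j - 1 \<or> (i = N \<and> j = 1) then P2 else 0)"
  show "\<exists>p. degree p \<le> k \<and> (\<forall>x\<in>{node N (int j - 1)..node N (int j)}. ell k N i x = poly p x)"
  proof (intro exI[of _ ?P] conjI ballI)
    show "degree ?P \<le> k" using P1 P2 by (auto intro!: degree_add_le)
    fix x assume x: "x \<in> {node N (int j - 1)..node N (int j)}"
    have a: "psi k (x * real N - (real j - 1)) = poly P1 x" using P1(2)[rule_format, of x] by (simp add: algebra_simps)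
    have b: "psi k (real j - x * real N) = poly P2 x" using P2(2)[rule_format, of x] by (simp add: algebra_simps)
    show "ell k N i x = poly ?P x" unfolding ell_01[OF assms j x] a b by simp
  qed
qed

lemma q_Vh:
  assumes "N \<ge> 1" "i \<in> {1..N}" "1 \<le> \<nu>" "\<nu> \<le> k - 1"
  shows "q k N i \<nu> \<in> Vh k N"
  unfolding Vh_def
proof (intro CollectI conjI ballI)
  show "continuous_on UNIV (q k N i \<nu>)" by (rule q_cont[OF assms(1,2)])
  show "periodic1 (q k N i \<nu>)" by (rule q_periodic)
  fix j assume j: "j \<in> {1..N}"
  obtain P1 where P1: "degree P1 \<le> k" "\<forall>x. phi k \<nu> (- (real j - 1) + real N * x) = poly P1 x"
    using phi_affine[OF assms(3,4)] by blast
  let ?P = "(if i = j then P1 else 0)"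
  show "\<exists>p. degree p \<le> k \<and> (\<forall>x\<in>{node N (int j - 1)..node N (int j)}. q k N i \<nu> x = poly p x)"
  proof (intro exI[of _ ?P] conjI ballI)
    show "degree ?P \<le> k" using P1 by auto
    fix x assume x: "x \<in> {node N (int j - 1)..node N (int j)}"
    have a: "phi k \<nu> (x * real N - (real j - 1)) = poly P1 x" using P1(2)[rule_format, of x] by (simp add: algebra_simps)
    show "q k N i \<nu> x = poly ?P x" unfolding q_01[OF assms(1,2) j x] a by simp
  qed
qed

lemma node_reduce:
  assumes "N \<ge> 1" "periodic1 w" "\<And>j. j \<in> {1..N} \<Longrightarrow> w (node N (int j)) = 0"
  shows "w (node N m) = 0"
proof -
  define d where "d = m div int N"
  define r where "r = m mod int N"
  have m: "m = int N * d + r" unfolding d_def r_def by simp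
  have r: "0 \<le> r" "r < int N" unfolding r_def using assms(1) by auto
  have N: "real N > 0" using assms(1) by simp
  show ?thesis
  proof (cases "r = 0")
    case True
    have "node N m = node N (int N) + of_int (d - 1)"
      unfolding m True node_def using N by (simp add: field_simps)
    then have "w (node N m) = w (node N (int N))" using periodic_int[OF assms(2), of "node N (int N)" "d - 1"] by simp
    then show ?thesis using assms(3)[of N] assms(1) by simp
  next
    case False
    have "node N m = node N (int (nat r)) + of_int d"
      unfolding m node_def using N r by (simp add: field_simps)
    moreover have "nat r \<in> {1..N}" using r False by auto
    ultimately show ?thesis using periodic_int[OF assms(2)] assms(3)[of "nat r"] by simp
  qed
qed

lemma ell_node:
  assumes "N \<ge> 1" "k \<ge> 1" "i \<in> {1..N}" "j \<in> {1..N}"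
  shows "ell k N i (node N (int j)) = (if i = j then psi k 1 else 0)"
proof -
  have x: "node N (int j) \<in> {node N (int j - 1)..node N (int j)}"
    using assms(1) by (auto simp: node_def divide_right_mono)
  have e: "node N (int j) * real N = real j" using assms(1) by (simp add: node_def)
  show ?thesis unfolding ell_01[OF assms x] e using psi_0[OF assms(2)] by auto
qed

lemma q_S2:
  assumes "N \<ge> 1" "i \<in> {1..N}" "1 \<le> \<nu>" "\<nu> \<le> k - 1"
  shows "q k N i \<nu> \<in> S2 k N"
  unfolding S2_def
proof (intro CollectI conjI allI)
  show "q k N i \<nu> \<in> Vh k N" by (rule q_Vh[OF assms])
  fix m
  show "q k N i \<nu> (node N m) = 0"
  proof (rule node_reduce[OF assms(1) q_periodic])
    fix j assume j: "j \<in> {1..N}"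
    have x: "node N (int j) \<in> {node N (int j - 1)..node N (int j)}"
      using assms(1) by (auto simp: node_def divide_right_mono)
    have e: "node N (int j) * real N = real j" using assms(1) by (simp add: node_def)
    show "q k N i \<nu> (node N (int j)) = 0" unfolding q_01[OF assms(1,2) j x] e by (simp add: phi_def)
  qed
qed

lemma node_succ: "N \<ge> 1 \<Longrightarrow> node N (int j) = node N (int j - 1) + 1 / real N"
  by (simp add: node_def field_simps)

lemma local_orth:
  fixes W :: "real poly"
  assumes "N \<ge> 1" "k \<ge> 1" "degree W \<le> k" "poly W a = 0" "poly W (a + 1 / real N) = 0"
  shows "integral {a..a + 1 / real N} (\<lambda>x. psi k ((x - a) * real N) * poly W x) = 0"
    and "integral {a..a + 1 / real N} (\<lambda>x. psi k (1 - (x - a) * real N) * poly W x) = 0"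
proof -
  have N: "real N > 0" using assms(1) by simp
  define R where "R = pcompose W [:a, 1 / real N:]"
  have R: "poly R t = poly W (a + 1 / real N * t)" for t unfolding R_def by (simp add: poly_pcompose)
  have degR: "degree R \<le> k"
    unfolding R_def using degree_pcompose_le[of W "[:a, 1 / real N:]"] assms(3)
    by (cases "1 / real N = 0") auto
  have R0: "poly R 0 = 0" "poly R 1 = 0" using assms(4,5) by (simp_all add: R)
  have c1: "continuous_on UNIV (\<lambda>x. psi k ((x - a) * real N) * poly W x)"
    by (intro continuous_intros psi_cont) 
  have c2: "continuous_on UNIV (\<lambda>x. psi k (1 - (x - a) * real N) * poly W x)"
    by (intro continuous_intros psi_cont)
  have "integral {a..a + 1 / real N} (\<lambda>x. psi k ((x - a) * real N) * poly W x) =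
      1 / real N * integral {0..1} (\<lambda>t. psi k ((a + 1 / real N * t - a) * real N) * poly W (a + 1 / real N * t))"
    using integral_affine01[OF c1, of "1 / real N" a] N by simp
  also have "(\<lambda>t. psi k ((a + 1 / real N * t - a) * real N) * poly W (a + 1 / real N * t)) = (\<lambda>t. psi k t * poly R t)"
    using N by (auto simp: R)
  also have "integral {0..1} (\<lambda>t. psi k t * poly R t) = 0" by (rule psi_orth[OF assms(2) degR R0])
  finally show "integral {a..a + 1 / real N} (\<lambda>x. psi k ((x - a) * real N) * poly W x) = 0" by simp
  define R2 where "R2 = pcompose R [:1, -1:]"
  have R2: "poly R2 t = poly R (1 - t)" for t unfolding R2_def by (simp add: poly_pcompose)
  have degR2: "degree R2 \<le> k"
    unfolding R2_def using degree_pcompose_le[of R "[:1, -1:]"] degR by simp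
  have R20: "poly R2 0 = 0" "poly R2 1 = 0" using R0 by (simp_all add: R2)
  have "integral {a..a + 1 / real N} (\<lambda>x. psi k (1 - (x - a) * real N) * poly W x) =
      1 / real N * integral {0..1} (\<lambda>t. psi k (1 - (a + 1 / real N * t - a) * real N) * poly W (a + 1 / real N * t))"
    using integral_affine01[OF c2, of "1 / real N" a] N by simp
  also have "(\<lambda>t. psi k (1 - (a + 1 / real N * t - a) * real N) * poly W (a + 1 / real N * t)) = (\<lambda>t. psi k (1 - t) * poly R2 (1 - t))"
    using N by (auto simp: R R2)
  also have "integral {0..1} (\<lambda>t. psi k (1 - t) * poly R2 (1 - t)) = integral {0..1} (\<lambda>t. psi k t * poly R2 t)"
    by (rule integral_flip01[of "\<lambda>t. psi k t * poly R2 t"]) (intro continuous_intros psi_cont)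
  also have "\<dots> = 0" by (rule psi_orth[OF assms(2) degR2 R20])
  finally show "integral {a..a + 1 / real N} (\<lambda>x. psi k (1 - (x - a) * real N) * poly W x) = 0" by simp
qed

lemma ell_orth:
  assumes "N \<ge> 1" "k \<ge> 1" "i \<in> {1..N}" "w \<in> S2 k N"
  shows "ip (ell k N i) w = 0"
proof -
  have cw: "continuous_on UNIV w" using assms(4) unfolding S2_def by (auto intro: Vh_cont)
  have ce: "continuous_on UNIV (ell k N i)" by (rule ell_cont[OF assms(1-3)])
  have "ip (ell k N i) w = integral {0..1} (\<lambda>x. ell k N i x * w x)" by (rule ip_cont_eq_integral[OF ce cw])
  also have "\<dots> = (\<Sum>j\<in>{1..N}. integral {node N (int j - 1)..node N (int j)} (\<lambda>x. ell k N i x * w x))"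
    by (rule integral_split01[OF _ assms(1)]) (intro continuous_intros ce cw)
  also have "\<dots> = 0"
  proof (intro sum.neutral ballI)
    fix j assume j: "j \<in> {1..N}"
    define a where "a = node N (int j - 1)"
    have nj: "node N (int j) = a + 1 / real N" unfolding a_def by (rule node_succ[OF assms(1)])
    obtain W where W: "degree W \<le> k" "\<forall>x\<in>{node N (int j - 1)..node N (int j)}. w x = poly W x"
      using Vh_piece[OF _ j, of w k] assms(4) unfolding S2_def by blast
    have N: "real N > 0" using assms(1) by simp
    have w0: "w a = 0" "w (a + 1 / real N) = 0"
      using assms(4) nj[symmetric] unfolding S2_def a_def by (auto simp del: of_int_diff)
    have ain: "a \<in> {node N (int j - 1)..node N (int j)}" "a + 1 / real N \<in> {node N (int j - 1)..node N (int j)}"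
      using nj N unfolding a_def by auto
    have wa: "poly W a = 0" "poly W (a + 1 / real N) = 0"
      using W(2) ain w0 by auto
    define A where "A = (if i = j then 1 else 0 :: real)"
    define B where "B = (if int i = int j - 1 \<or> (i = N \<and> j = 1) then 1 else 0 :: real)"
    have eq: "ell k N i x * w x = A * (psi k ((x - a) * real N) * poly W x) + B * (psi k (1 - (x - a) * real N) * poly W x)"
      if x: "x \<in> {a..a + 1 / real N}" for x
    proof -
      have x': "x \<in> {node N (int j - 1)..node N (int j)}" using x nj unfolding a_def by simp
      have e1: "x * real N - (real j - 1) = (x - a) * real N" unfolding a_def node_def using N
        by (simp add: field_simps)
      have e2: "real j - x * real N = 1 - (x - a) * real N" unfolding a_def node_def using N
        by (simp add: field_simps)
      show ?thesis unfolding ell_01[OF assms(1-3) j x'] W(2)[rule_format, OF x'] e1 e2 A_def B_def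
        by (simp add: algebra_simps)
    qed
    have "integral {a..a + 1 / real N} (\<lambda>x. ell k N i x * w x) =
      integral {a..a + 1 / real N} (\<lambda>x. A * (psi k ((x - a) * real N) * poly W x) + B * (psi k (1 - (x - a) * real N) * poly W x))"
      by (rule integral_cong) (use eq in auto)
    also have "\<dots> = A * integral {a..a + 1 / real N} (\<lambda>x. psi k ((x - a) * real N) * poly W x) +
        B * integral {a..a + 1 / real N} (\<lambda>x. psi k (1 - (x - a) * real N) * poly W x)"
      by (subst integral_add) (auto intro!: integrable_continuous_interval continuous_intros psi_cont
           continuous_on_subset[OF psi_cont[of "\<lambda>x. (x - a) * real N"]]
           continuous_on_subset[OF psi_cont[of "\<lambda>x. 1 - (x - a) * real N"]])
    also have "\<dots> = 0" using local_orth[OF assms(1,2) W(1) wa] by simp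
    finally show "integral {node N (int j - 1)..node N (int j)} (\<lambda>x. ell k N i x * w x) = 0"
      unfolding a_def[symmetric] nj .
  qed
  finally show ?thesis .
qed

lemma ell_S1:
  assumes "N \<ge> 1" "k \<ge> 1" "i \<in> {1..N}"
  shows "ell k N i \<in> S1 k N"
  unfolding S1_def using ell_Vh[OF assms] ell_orth[OF assms] by blast

lemma ip_poly: "ip (poly r) (poly r) = integral {0..1} (\<lambda>t. (poly r t)\<^sup>2)"
  using ip_cont_eq_integral[of "poly r" "poly r"] by (simp add: power2_eq_square continuous_on_poly)

lemma ref_nodal:
  "\<exists>K\<ge>0. \<forall>r::real poly. degree r \<le> k \<longrightarrow> (poly r 1)\<^sup>2 \<le> K * integral {0..1} (\<lambda>t. (poly r t)\<^sup>2)"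
proof -
  have cont: "\<And>i. i \<in> {..k} \<Longrightarrow> continuous_on UNIV (\<lambda>x::real. x ^ i)" by (intro continuous_intros)
  obtain K0 where K0: "K0 \<ge> 0" and K0b: "\<forall>a. \<exists>c. (\<forall>x\<in>{0..1}. (\<Sum>j\<in>{..k}. c j * x ^ j) = (\<Sum>j\<in>{..k}. a j * x ^ j)) \<and>
           (\<Sum>j\<in>{..k}. (c j)\<^sup>2) \<le> K0 * ip (\<lambda>x. \<Sum>j\<in>{..k}. a j * x ^ j) (\<lambda>x. \<Sum>j\<in>{..k}. a j * x ^ j)"
    using coef_bound[of "{..k}" "\<lambda>j x. x ^ j", OF finite_atMost cont] by blast
  show ?thesis
  proof (intro exI[of _ "real (k + 1) * K0"] conjI allI impI)
    show "real (k + 1) * K0 \<ge> 0" using K0 by simp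
    fix r :: "real poly" assume r: "degree r \<le> k"
    have pr: "poly r x = (\<Sum>j\<in>{..k}. coeff r j * x ^ j)" for x
    proof -
      have "poly r x = poly (\<Sum>i\<le>k. monom (coeff r i) i) x" using poly_as_sum_of_monoms'[OF r] by simp
      then show ?thesis by (simp add: poly_sum poly_monom)
    qed
    obtain c where c1: "\<forall>x\<in>{0..1}. (\<Sum>j\<in>{..k}. c j * x ^ j) = (\<Sum>j\<in>{..k}. coeff r j * x ^ j)"
      and c2: "(\<Sum>j\<in>{..k}. (c j)\<^sup>2) \<le> K0 * ip (\<lambda>x. \<Sum>j\<in>{..k}. coeff r j * x ^ j) (\<lambda>x. \<Sum>j\<in>{..k}. coeff r j * x ^ j)"
      using K0b by blast
    have fe: "(\<lambda>x. \<Sum>j\<in>{..k}. coeff r j * x ^ j) = poly r" by (rule ext) (simp add: pr)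
    have "poly r 1 = (\<Sum>j\<in>{..k}. c j)" using c1[rule_format, of 1] pr[of 1] by simp
    then have "(poly r 1)\<^sup>2 \<le> (\<Sum>j\<in>{..k}. (c j)\<^sup>2) * real (card {..k})"
      using sum_squared_le_sum_of_squares[of c "{..k}"] by simp
    also have "\<dots> \<le> K0 * ip (poly r) (poly r) * real (k + 1)"
      using c2 unfolding fe card_atMost Suc_eq_plus1 by (intro mult_right_mono) auto
    also have "\<dots> = real (k + 1) * K0 * integral {0..1} (\<lambda>t. (poly r t)\<^sup>2)" by (simp add: ip_poly)
    finally show "(poly r 1)\<^sup>2 \<le> real (k + 1) * K0 * integral {0..1} (\<lambda>t. (poly r t)\<^sup>2)" .
  qed
qed

definition inB :: "nat \<Rightarrow> (real \<Rightarrow> real) \<Rightarrow> bool" where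
  "inB n f \<longleftrightarrow> (\<exists>e. \<forall>x. f x = (\<Sum>a\<le>n. e a * x ^ a * (1 - x) ^ (n - a)))"

lemma inB_add: "inB n f \<Longrightarrow> inB n g \<Longrightarrow> inB n (\<lambda>x. f x + g x)"
proof -
  assume "inB n f" "inB n g"
  then obtain e1 e2 where "\<forall>x. f x = (\<Sum>a\<le>n. e1 a * x ^ a * (1 - x) ^ (n - a))"
    "\<forall>x. g x = (\<Sum>a\<le>n. e2 a * x ^ a * (1 - x) ^ (n - a))" unfolding inB_def by blast
  then show ?thesis unfolding inB_def
    by (intro exI[of _ "\<lambda>a. e1 a + e2 a"]) (simp add: sum.distrib algebra_simps)
qed

lemma inB_mono: "a + b \<le> n \<Longrightarrow> inB n (\<lambda>x. x ^ a * (1 - x) ^ b)"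
proof -
  have "\<forall>a b. a + b + d = n \<longrightarrow> inB n (\<lambda>x. x ^ a * (1 - x) ^ b)" for d
  proof (induction d)
    case 0
    show ?case
    proof (intro allI impI)
      fix a b assume ab: "a + b + 0 = n"
      have "x ^ a * (1 - x) ^ b = (\<Sum>a'\<le>n. (if a' = a then 1 else 0) * x ^ a' * (1 - x) ^ (n - a'))" for x :: real
      proof -
        have "(\<Sum>a'\<le>n. (if a' = a then 1 else 0) * x ^ a' * (1 - x) ^ (n - a')) =
              (\<Sum>a'\<le>n. (if a' = a then x ^ a' * (1 - x) ^ (n - a') else 0))"
          by (intro sum.cong) auto
        also have "\<dots> = x ^ a * (1 - x) ^ (n - a)" using ab by simp
        moreover have "b = n - a" using ab by simp
        ultimately show ?thesis by simp
      qed
      then show "inB n (\<lambda>x. x ^ a * (1 - x) ^ b)" unfolding inB_def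
        by (intro exI[of _ "\<lambda>a'. if a' = a then (1::real) else 0"]) simp
    qed
  next
    case (Suc d)
    show ?case
    proof (intro allI impI)
      fix a b assume ab: "a + b + Suc d = n"
      have "inB n (\<lambda>x. x ^ Suc a * (1 - x) ^ b + x ^ a * (1 - x) ^ Suc b)"
        using Suc.IH[rule_format, of "Suc a" b] Suc.IH[rule_format, of a "Suc b"] ab by (intro inB_add) auto
      moreover have "x ^ Suc a * (1 - x) ^ b + x ^ a * (1 - x) ^ Suc b = x ^ a * (1 - x) ^ b" for x :: real
        by (simp add: algebra_simps)
      ultimately show "inB n (\<lambda>x. x ^ a * (1 - x) ^ b)" by simp
    qed
  qed
  moreover assume "a + b \<le> n"
  ultimately show ?thesis by (metis le_add_diff_inverse)
qed

lemma inB_poly: assumes "degree t \<le> n" shows "inB n (poly t)"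
proof -
  have "\<forall>j\<in>{..n}. \<exists>e. \<forall>x::real. x ^ j = (\<Sum>a\<le>n. e a * x ^ a * (1 - x) ^ (n - a))"
  proof
    fix j assume "j \<in> {..n}"
    then have "inB n (\<lambda>x. x ^ j * (1 - x) ^ 0)" by (intro inB_mono) auto
    then show "\<exists>e. \<forall>x::real. x ^ j = (\<Sum>a\<le>n. e a * x ^ a * (1 - x) ^ (n - a))" by (simp add: inB_def)
  qed
  from bchoice[OF this] obtain E where E: "\<forall>j\<in>{..n}. \<forall>x::real. x ^ j = (\<Sum>a\<le>n. E j a * x ^ a * (1 - x) ^ (n - a))"
    by blast
  have pr: "poly t x = (\<Sum>j\<in>{..n}. coeff t j * x ^ j)" for x
  proof -
    have "poly t x = poly (\<Sum>i\<le>n. monom (coeff t i) i) x" using poly_as_sum_of_monoms'[OF assms] by simp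
    then show ?thesis by (simp add: poly_sum poly_monom)
  qed
  have "poly t x = (\<Sum>a\<le>n. (\<Sum>j\<le>n. coeff t j * E j a) * x ^ a * (1 - x) ^ (n - a))" for x
  proof -
    have "poly t x = (\<Sum>j\<le>n. coeff t j * (\<Sum>a\<le>n. E j a * x ^ a * (1 - x) ^ (n - a)))"
      unfolding pr
    proof (rule sum.cong[OF refl])
      fix j assume j: "j \<in> {..n}"
      have "x ^ j = (\<Sum>a\<le>n. E j a * x ^ a * (1 - x) ^ (n - a))" using E j by blast
      then show "coeff t j * x ^ j = coeff t j * (\<Sum>a\<le>n. E j a * x ^ a * (1 - x) ^ (n - a))" by simp
    qed
    also have "\<dots> = (\<Sum>j\<le>n. \<Sum>a\<le>n. coeff t j * E j a * x ^ a * (1 - x) ^ (n - a))"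
      by (simp add: sum_distrib_left mult.assoc)
    also have "\<dots> = (\<Sum>a\<le>n. \<Sum>j\<le>n. coeff t j * E j a * x ^ a * (1 - x) ^ (n - a))"
      by (rule sum.swap)
    also have "\<dots> = (\<Sum>a\<le>n. (\<Sum>j\<le>n. coeff t j * E j a) * x ^ a * (1 - x) ^ (n - a))"
      by (simp add: sum_distrib_right)
    finally show ?thesis .
  qed
  then show ?thesis unfolding inB_def
    by (intro exI[of _ "\<lambda>a. \<Sum>j\<le>n. coeff t j * E j a"]) simp
qed

lemma ref_span:
  assumes "k \<ge> 1" "degree r \<le> k" "poly r 0 = 0" "poly r 1 = 0"
  shows "\<exists>a. \<forall>x. poly r x = (\<Sum>\<nu>\<in>{1..k-1}. a \<nu> * phi k \<nu> x)"
proof -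
  obtain s1 where s1: "r = [:-0,1:] * s1" using assms(3) poly_eq_0_iff_dvd[of r 0] by (auto elim: dvdE)
  have "poly s1 1 = 0" using assms(4) s1 by simp
  then obtain t where t: "s1 = [:-1,1:] * t" using poly_eq_0_iff_dvd[of s1 1] by (auto elim: dvdE)
  have pr: "poly r x = x * (x - 1) * poly t x" for x using s1 t by (simp add: algebra_simps)
  show ?thesis
  proof (cases "t = 0")
    case True
    then show ?thesis using pr by (intro exI[of _ "\<lambda>_. 0"]) simp
  next
    case False
    have nz1: "[:-1,1::real:] * t \<noteq> 0" using False by (simp only: mult_eq_0_iff) simp
    have "degree r = degree [:-0,1::real:] + degree ([:-1,1:] * t)" unfolding s1 t
      by (rule degree_mult_eq) (use nz1 in auto)
    also have "degree ([:-1,1::real:] * t) = degree [:-1,1::real:] + degree t"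
      by (rule degree_mult_eq) (use False in auto)
    finally have "degree r = 1 + (1 + degree t)" by simp
    then have dt: "degree t \<le> k - 2" and k2: "k \<ge> 2" using assms(2) by arith+
    define n where "n = k - 2"
    obtain e where e: "\<forall>x. poly t x = (\<Sum>a\<le>n. e a * x ^ a * (1 - x) ^ (n - a))"
      using inB_poly[of t n] dt unfolding inB_def n_def by auto
    define A where "A = (\<lambda>\<nu>. - e (\<nu> - 1) / real (n choose (\<nu> - 1)))"
    have "(\<Sum>\<nu>\<in>{1..k-1}. A \<nu> * phi k \<nu> x) = poly r x" for x
    proof -
      have km: "k - 1 = Suc n" using k2 unfolding n_def by arith
      have "(\<Sum>\<nu>\<in>{1..k-1}. A \<nu> * phi k \<nu> x) = (\<Sum>a\<in>{0..n}. A (Suc a) * phi k (Suc a) x)"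
        unfolding km using sum.atLeast_Suc_atMost_Suc_shift[of "\<lambda>\<nu>. A \<nu> * phi k \<nu> x" 0 n] by simp
      also have "\<dots> = (\<Sum>a\<in>{0..n}. - e a * (x * (1 - x)) * x ^ a * (1 - x) ^ (n - a))"
      proof (rule sum.cong[OF refl])
        fix a assume a: "a \<in> {0..n}"
        have c: "real (n choose a) \<noteq> 0" using a by simp
        have kk: "k - 2 = n" "k - 1 - Suc a = n - a" unfolding n_def by arith+
        show "A (Suc a) * phi k (Suc a) x = - e a * (x * (1 - x)) * x ^ a * (1 - x) ^ (n - a)"
          unfolding A_def phi_def kk using c by (simp add: field_simps)
      qed
      also have "\<dots> = x * (x - 1) * (\<Sum>a\<in>{0..n}. e a * x ^ a * (1 - x) ^ (n - a))"
        by (simp add: sum_distrib_left algebra_simps)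
      also have "\<dots> = poly r x" using e pr by (simp add: atMost_atLeast0)
      finally show ?thesis .
    qed
    then show ?thesis by (intro exI[of _ A]) simp
  qed
qed

lemma ref_q:
  assumes "k \<ge> 1"
  shows "\<exists>K\<ge>0. \<forall>r::real poly. degree r \<le> k \<and> poly r 0 = 0 \<and> poly r 1 = 0 \<longrightarrow>
    (\<exists>c. (\<forall>t\<in>{0..1}. poly r t = (\<Sum>\<nu>\<in>{1..k-1}. c \<nu> * phi k \<nu> t)) \<and>
         (\<Sum>\<nu>\<in>{1..k-1}. (c \<nu>)\<^sup>2) \<le> K * integral {0..1} (\<lambda>t. (poly r t)\<^sup>2))"
proof -
  have cont: "\<And>\<nu>. \<nu> \<in> {1..k-1} \<Longrightarrow> continuous_on UNIV (phi k \<nu>)"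
    using phi_cont[of "\<lambda>x. x"] by (simp add: continuous_on_id)
  obtain K where K: "K \<ge> 0" and Kb: "\<forall>a. \<exists>c. (\<forall>x\<in>{0..1}. (\<Sum>j\<in>{1..k-1}. c j * phi k j x) = (\<Sum>j\<in>{1..k-1}. a j * phi k j x)) \<and>
           (\<Sum>j\<in>{1..k-1}. (c j)\<^sup>2) \<le> K * ip (\<lambda>x. \<Sum>j\<in>{1..k-1}. a j * phi k j x) (\<lambda>x. \<Sum>j\<in>{1..k-1}. a j * phi k j x)"
    using coef_bound[of "{1..k-1}" "\<lambda>\<nu>. phi k \<nu>", OF finite_atLeastAtMost cont] by blast
  show ?thesis
  proof (intro exI[of _ K] conjI allI impI)
    show "K \<ge> 0" by fact
    fix r :: "real poly" assume r: "degree r \<le> k \<and> poly r 0 = 0 \<and> poly r 1 = 0"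
    obtain a where a: "\<forall>x. poly r x = (\<Sum>\<nu>\<in>{1..k-1}. a \<nu> * phi k \<nu> x)"
      using ref_span[OF assms] r by blast
    have fe: "(\<lambda>x. \<Sum>j\<in>{1..k-1}. a j * phi k j x) = poly r" using a by auto
    obtain c where c1: "\<forall>x\<in>{0..1}. (\<Sum>j\<in>{1..k-1}. c j * phi k j x) = (\<Sum>j\<in>{1..k-1}. a j * phi k j x)"
      and c2: "(\<Sum>j\<in>{1..k-1}. (c j)\<^sup>2) \<le> K * ip (\<lambda>x. \<Sum>j\<in>{1..k-1}. a j * phi k j x) (\<lambda>x. \<Sum>j\<in>{1..k-1}. a j * phi k j x)"
      using Kb by blast
    show "\<exists>c. (\<forall>t\<in>{0..1}. poly r t = (\<Sum>\<nu>\<in>{1..k-1}. c \<nu> * phi k \<nu> t)) \<and>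
         (\<Sum>\<nu>\<in>{1..k-1}. (c \<nu>)\<^sup>2) \<le> K * integral {0..1} (\<lambda>t. (poly r t)\<^sup>2)"
      using c1 c2 a unfolding fe ip_poly by (intro exI[of _ c]) auto
  qed
qed

lemma loc_scale:
  assumes "N \<ge> 1" "continuous_on UNIV s" "\<forall>x\<in>{a..a + 1 / real N}. s x = poly W x"
  shows "integral {0..1} (\<lambda>t. (poly (pcompose W [:a, 1 / real N:]) t)\<^sup>2) = real N * integral {a..a + 1 / real N} (\<lambda>x. (s x)\<^sup>2)"
    and "\<forall>t\<in>{0..1}. poly (pcompose W [:a, 1 / real N:]) t = s (a + t / real N)"
proof -
  have N: "real N > 0" using assms(1) by simp
  show pt: "\<forall>t\<in>{0..1}. poly (pcompose W [:a, 1 / real N:]) t = s (a + t / real N)"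
  proof
    fix t :: real assume t: "t \<in> {0..1}"
    have "a + t / real N \<in> {a..a + 1 / real N}" using t N by (auto simp: divide_right_mono)
    then show "poly (pcompose W [:a, 1 / real N:]) t = s (a + t / real N)"
      using assms(3) by (simp add: poly_pcompose)
  qed
  have c: "continuous_on UNIV (\<lambda>x. (s x)\<^sup>2)" by (intro continuous_intros assms(2))
  have "integral {a..a + 1 / real N} (\<lambda>x. (s x)\<^sup>2) = 1 / real N * integral {0..1} (\<lambda>t. (s (a + 1 / real N * t))\<^sup>2)"
    using integral_affine01[OF c, of "1 / real N" a] N by simp
  also have "integral {0..1} (\<lambda>t. (s (a + 1 / real N * t))\<^sup>2) = integral {0..1} (\<lambda>t. (poly (pcompose W [:a, 1 / real N:]) t)\<^sup>2)"
    by (rule integral_cong) (use pt in auto)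
  finally show "integral {0..1} (\<lambda>t. (poly (pcompose W [:a, 1 / real N:]) t)\<^sup>2) = real N * integral {a..a + 1 / real N} (\<lambda>x. (s x)\<^sup>2)"
    using N by simp
qed

lemma find_j:
  assumes "N \<ge> 1" "x \<in> {0..1}"
  shows "\<exists>j\<in>{1..N}. x \<in> {node N (int j - 1)..node N (int j)}"
proof -
  have N: "real N > 0" using assms(1) by simp
  define y where "y = x * real N"
  have y: "0 \<le> y" "y \<le> real N" using assms(2) N unfolding y_def by (auto simp: mult_left_le_one_le)
  define j where "j = max 1 (nat \<lceil>y\<rceil>)"
  have jN: "j \<in> {1..N}" unfolding j_def using y assms(1) by (auto simp: nat_le_iff ceiling_le_iff)
  have "real j - 1 \<le> y \<and> y \<le> real j"
  proof (cases "\<lceil>y\<rceil> \<ge> 1")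
    case True
    then have "j = nat \<lceil>y\<rceil>" unfolding j_def by (simp add: max_def Suc_le_eq)
    then have "real j = of_int \<lceil>y\<rceil>" using True by simp
    then show ?thesis using ceiling_correct[of y] by linarith
  next
    case False
    then have "y = 0" using y by (metis ceiling_le_zero less_eq_real_def not_le zero_less_ceiling zero_less_one int_one_le_iff_zero_less)
    then show ?thesis unfolding j_def using False by auto
  qed
  then have "x \<in> {node N (int j - 1)..node N (int j)}"
    unfolding node_def y_def using N by (auto simp: field_simps)
  then show ?thesis using jN by blast
qed

lemma aux_sqrt:
  fixes X B S M :: real
  assumes "X \<ge> 0" "X \<le> B * S" "S\<^sup>2 \<le> M * X" "B \<ge> 0" "M \<ge> 0"
  shows "sqrt X \<le> B * sqrt M"
proof (cases "X = 0")
  case True then show ?thesis using assms by simp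
next
  case False
  then have X0: "X > 0" using assms(1) by simp
  have "X\<^sup>2 \<le> (B * S)\<^sup>2" using assms(1,2) by (intro power_mono) auto
  also have "\<dots> = B\<^sup>2 * S\<^sup>2" by (simp add: power_mult_distrib)
  also have "\<dots> \<le> B\<^sup>2 * (M * X)" using assms(3) by (intro mult_left_mono) auto
  finally have "X * X \<le> (B\<^sup>2 * M) * X" by (simp add: power2_eq_square algebra_simps)
  then have "X \<le> B\<^sup>2 * M" using X0 by simp
  then have "sqrt X \<le> sqrt (B\<^sup>2 * M)" by (rule real_sqrt_le_mono)
  also have "\<dots> = B * sqrt M" using assms(4) by (simp add: real_sqrt_mult)
  finally show ?thesis .
qed

lemma proj_bound:
  fixes g :: "'i \<Rightarrow> real \<Rightarrow> real"
  assumes "finite I" "\<And>i. i \<in> I \<Longrightarrow> L2 (g i)" "L2 v" "L2 p" "ip v p = ip p p"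
    "\<forall>x\<in>{0..1}. p x = (\<Sum>i\<in>I. d i * g i x)" "\<And>i. i \<in> I \<Longrightarrow> \<bar>ip v (g i)\<bar> \<le> B"
    "(\<Sum>i\<in>I. (d i)\<^sup>2) * real (card I) \<le> M * ip p p" "B \<ge> 0" "M \<ge> 0"
  shows "sqrt (ip p p) \<le> B * sqrt M"
proof (rule aux_sqrt[OF ip_nonneg _ _ assms(9,10)])
  have "ip v p = ip v (\<lambda>x. \<Sum>i\<in>I. d i * g i x)" by (rule ip_cong) (use assms(6) in auto)
  also have "\<dots> = (\<Sum>i\<in>I. d i * ip (g i) v)"
    using assms(1-3) by (subst ip_sym, subst ip_sum) auto
  finally have e: "ip p p = (\<Sum>i\<in>I. d i * ip v (g i))" using assms(5) by (simp add: ip_sym)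
  have "ip p p \<le> (\<Sum>i\<in>I. \<bar>d i\<bar> * B)"
    unfolding e
  proof (rule order.trans[OF _ sum_mono])
    show "(\<Sum>i\<in>I. d i * ip v (g i)) \<le> (\<Sum>i\<in>I. \<bar>d i * ip v (g i)\<bar>)" by (rule sum_mono) simp
    show "\<bar>d i * ip v (g i)\<bar> \<le> \<bar>d i\<bar> * B" if "i \<in> I" for i
      using assms(7)[OF that] by (simp add: abs_mult mult_left_mono)
  qed
  also have "\<dots> = B * (\<Sum>i\<in>I. \<bar>d i\<bar>)" by (simp add: sum_distrib_left mult.commute)
  finally show "ip p p \<le> B * (\<Sum>i\<in>I. \<bar>d i\<bar>)" .
  have "(\<Sum>i\<in>I. \<bar>d i\<bar>)\<^sup>2 \<le> (\<Sum>i\<in>I. \<bar>d i\<bar>\<^sup>2) * real (card I)"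
    by (rule sum_squared_le_sum_of_squares)
  also have "\<dots> = (\<Sum>i\<in>I. (d i)\<^sup>2) * real (card I)" by simp
  also have "\<dots> \<le> M * ip p p" by (rule assms(8))
  finally show "(\<Sum>i\<in>I. \<bar>d i\<bar>)\<^sup>2 \<le> M * ip p p" .
qed

lemma l2proj_eq:
  assumes "\<And>f. f \<in> S \<Longrightarrow> continuous_on UNIV f \<and> periodic1 f"
    "\<And>f g. f \<in> S \<Longrightarrow> g \<in> S \<Longrightarrow> (\<lambda>x. f x - g x) \<in> S"
    "p \<in> S" "\<forall>w\<in>S. ip (\<lambda>x. v x - p x) w = 0" "L2 v"
  shows "l2proj S v = p"
  unfolding l2proj_def
proof (rule the_equality)
  show "p \<in> S \<and> (\<forall>w\<in>S. ip (\<lambda>x. v x - p x) w = 0)" using assms(3,4) by blast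
  fix p' assume p': "p' \<in> S \<and> (\<forall>w\<in>S. ip (\<lambda>x. v x - p' x) w = 0)"
  define d where "d = (\<lambda>x. p' x - p x)"
  have dS: "d \<in> S" unfolding d_def using assms(2,3) p' by blast
  have cd: "continuous_on UNIV d" and pd: "periodic1 d" using assms(1)[OF dS] by auto
  have Lp: "L2 p" "L2 p'" using assms(1,3) p' L2_cont by blast+
  have Ld: "L2 d" using cd by (rule L2_cont)
  have "ip d d = ip (\<lambda>x. v x - p x) d - ip (\<lambda>x. v x - p' x) d"
  proof -
    have "d = (\<lambda>x. (v x - p x) - (v x - p' x))" unfolding d_def by auto
    then have "ip d d = ip (\<lambda>x. (v x - p x) - (v x - p' x)) d" by simp
    also have "\<dots> = ip (\<lambda>x. v x - p x) d - ip (\<lambda>x. v x - p' x) d"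
      using Lp assms(5) Ld by (intro ip_diff L2_diff) auto
    finally show ?thesis .
  qed
  also have "\<dots> = 0" using assms(4) p' dS by simp
  finally have "\<forall>x\<in>{0..1}. d x = 0" using ip_zero_imp[OF cd] by blast
  then have "d x = 0" for x
  proof -
    assume z: "\<forall>x\<in>{0..1}. d x = 0"
    have "d x = d (x - of_int \<lfloor>x\<rfloor> + of_int \<lfloor>x\<rfloor>)" by simp
    also have "\<dots> = d (x - of_int \<lfloor>x\<rfloor>)" by (rule periodic_int[OF pd])
    also have "\<dots> = 0"
    proof -
      have "0 \<le> x - of_int \<lfloor>x\<rfloor>" "x - of_int \<lfloor>x\<rfloor> \<le> 1"
        using of_int_floor_le[of x] real_of_int_floor_add_one_gt[of x] by linarith+
      then show ?thesis using z by auto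
    qed
    finally show ?thesis .
  qed
  then show "p' = p" unfolding d_def by (auto simp: fun_eq_iff)
qed

lemma S1_nodal_bound:
  assumes "k \<ge> 1"
  shows "\<exists>K1\<ge>0. \<forall>N\<ge>1. \<forall>s\<in>Vh k N. (\<Sum>j\<in>{1..N}. (s (node N (int j)))\<^sup>2) \<le> K1 * real N * ip s s"
proof -
  obtain K where K: "K \<ge> 0" "\<forall>r::real poly. degree r \<le> k \<longrightarrow> (poly r 1)\<^sup>2 \<le> K * integral {0..1} (\<lambda>t. (poly r t)\<^sup>2)"
    using ref_nodal[of k] by blast
  show ?thesis
  proof (intro exI[of _ K] conjI allI impI ballI)
    show "K \<ge> 0" by fact
    fix N :: nat and s assume N: "N \<ge> 1" and s: "s \<in> Vh k N"
    have cs: "continuous_on UNIV s" using s by (rule Vh_cont)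
    have loc: "(s (node N (int j)))\<^sup>2 \<le> K * real N * integral {node N (int j - 1)..node N (int j)} (\<lambda>x. (s x)\<^sup>2)"
      if j: "j \<in> {1..N}" for j
    proof -
      define a where "a = node N (int j - 1)"
      have nj: "node N (int j) = a + 1 / real N" unfolding a_def by (rule node_succ[OF N])
      obtain W where W: "degree W \<le> k" "\<forall>x\<in>{node N (int j - 1)..node N (int j)}. s x = poly W x"
        using Vh_piece[OF s j] by blast
      have W': "\<forall>x\<in>{a..a + 1 / real N}. s x = poly W x" using W(2) nj unfolding a_def by simp
      define r where "r = pcompose W [:a, 1 / real N:]"
      have degr: "degree r \<le> k"
        unfolding r_def using degree_pcompose_le[of W "[:a, 1 / real N:]"] W(1)
        by (cases "1 / real N = 0") auto
      have r1: "poly r 1 = s (node N (int j))" using loc_scale(2)[OF N cs W'] nj unfolding r_def by simp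
      have "(poly r 1)\<^sup>2 \<le> K * integral {0..1} (\<lambda>t. (poly r t)\<^sup>2)" using K(2) degr by blast
      also have "integral {0..1} (\<lambda>t. (poly r t)\<^sup>2) = real N * integral {a..a + 1 / real N} (\<lambda>x. (s x)\<^sup>2)"
        unfolding r_def by (rule loc_scale(1)[OF N cs W'])
      finally show ?thesis unfolding r1 nj a_def by (simp add: mult.assoc)
    qed
    have "(\<Sum>j\<in>{1..N}. (s (node N (int j)))\<^sup>2) \<le> (\<Sum>j\<in>{1..N}. K * real N * integral {node N (int j - 1)..node N (int j)} (\<lambda>x. (s x)\<^sup>2))"
      by (rule sum_mono) (rule loc)
    also have "\<dots> = K * real N * integral {0..1} (\<lambda>x. (s x)\<^sup>2)"
      by (subst integral_split01[OF _ N]) (auto intro!: continuous_intros cs simp: sum_distrib_left)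
    also have "integral {0..1} (\<lambda>x. (s x)\<^sup>2) = ip s s"
      using ip_cont_eq_integral[OF cs cs] by (simp add: power2_eq_square)
    finally show "(\<Sum>j\<in>{1..N}. (s (node N (int j)))\<^sup>2) \<le> K * real N * ip s s" .
  qed
qed

lemma S1_sub: "f \<in> S1 k N \<Longrightarrow> f \<in> Vh k N" unfolding S1_def by auto
lemma S2_sub: "f \<in> S2 k N \<Longrightarrow> f \<in> Vh k N" unfolding S2_def by auto

lemma S2_diff: "f \<in> S2 k N \<Longrightarrow> g \<in> S2 k N \<Longrightarrow> (\<lambda>x. f x - g x) \<in> S2 k N"
  unfolding S2_def using Vh_diff by auto

lemma S1_diff: assumes "f \<in> S1 k N" "g \<in> S1 k N" shows "(\<lambda>x. f x - g x) \<in> S1 k N"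
proof -
  have "ip (\<lambda>x. f x - g x) u = 0" if u: "u \<in> S2 k N" for u
  proof -
    have L: "L2 f" "L2 g" "L2 u" using assms u S1_sub S2_sub Vh_cont L2_cont by blast+
    show ?thesis using ip_diff[OF L] assms u unfolding S1_def by auto
  qed
  then show ?thesis using assms Vh_diff unfolding S1_def by auto
qed

lemma S1_repr:
  assumes "N \<ge> 1" "k \<ge> 1" "s \<in> S1 k N"
  shows "\<forall>x\<in>{0..1}. s x = (\<Sum>i\<in>{1..N}. (s (node N (int i)) / psi k 1) * ell k N i x)"
proof -
  define c where "c = (\<lambda>i. s (node N (int i)) / psi k 1)"
  define w where "w = (\<lambda>x. s x - (\<Sum>i\<in>{1..N}. c i * ell k N i x))"
  have p1: "psi k 1 \<noteq> 0" by (rule psi_1[OF assms(2)])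
  have ellV: "\<And>i. i \<in> {1..N} \<Longrightarrow> ell k N i \<in> Vh k N" using ell_Vh[OF assms(1,2)] by blast
  have sumV: "(\<lambda>x. \<Sum>i\<in>{1..N}. c i * ell k N i x) \<in> Vh k N"
    by (rule Vh_sum) (auto intro: ellV)
  have wV: "w \<in> Vh k N" unfolding w_def using S1_sub[OF assms(3)] sumV by (rule Vh_diff)
  have wnode: "w (node N (int j)) = 0" if j: "j \<in> {1..N}" for j
  proof -
    have "(\<Sum>i\<in>{1..N}. c i * ell k N i (node N (int j))) = (\<Sum>i\<in>{1..N}. if i = j then c i * psi k 1 else 0)"
      by (rule sum.cong[OF refl]) (simp add: ell_node[OF assms(1,2) _ j])
    also have "\<dots> = c j * psi k 1" using j by simp
    also have "\<dots> = s (node N (int j))" unfolding c_def using p1 by simp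
    finally show ?thesis unfolding w_def by simp
  qed
  have wS2: "w \<in> S2 k N"
    unfolding S2_def using wV node_reduce[OF assms(1) Vh_periodic[OF wV] wnode] by blast
  have Lell: "\<And>i. i \<in> {1..N} \<Longrightarrow> L2 (ell k N i)" using ellV Vh_cont L2_cont by blast
  have Ls: "L2 s" using S1_sub[OF assms(3)] Vh_cont L2_cont by blast
  have Lw: "L2 w" using wV Vh_cont L2_cont by blast
  have Lsum: "L2 (\<lambda>x. \<Sum>i\<in>{1..N}. c i * ell k N i x)" using sumV Vh_cont L2_cont by blast
  have "ip w w = ip (\<lambda>x. s x - (\<Sum>i\<in>{1..N}. c i * ell k N i x)) w"
    unfolding w_def[symmetric] by (rule refl)
  also have "\<dots> = ip s w - ip (\<lambda>x. \<Sum>i\<in>{1..N}. c i * ell k N i x) w"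
    by (rule ip_diff[OF Ls Lsum Lw])
  also have "ip s w = 0" using assms(3) wS2 unfolding S1_def by blast
  also have "ip (\<lambda>x. \<Sum>i\<in>{1..N}. c i * ell k N i x) w = (\<Sum>i\<in>{1..N}. c i * ip (ell k N i) w)"
    by (rule ip_sum[OF _ Lell Lw]) simp
  also have "\<dots> = 0" using ell_orth[OF assms(1,2) _ wS2] by simp
  finally have "ip w w = 0" by simp
  then have "\<forall>x\<in>{0..1}. w x = 0" using ip_zero_imp Vh_cont[OF wV] by blast
  then show ?thesis unfolding w_def c_def by auto
qed

lemma S2_repr:
  assumes "k \<ge> 1"
  shows "\<exists>K2\<ge>0. \<forall>N\<ge>1. \<forall>w\<in>S2 k N. \<exists>c. (\<forall>x\<in>{0..1}. w x = (\<Sum>p\<in>{1..N}\<times>{1..k-1}. c p * q k N (fst p) (snd p) x)) \<and>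
      (\<Sum>p\<in>{1..N}\<times>{1..k-1}. (c p)\<^sup>2) \<le> K2 * real N * ip w w"
proof -
  obtain K where K: "K \<ge> 0" "\<forall>r::real poly. degree r \<le> k \<and> poly r 0 = 0 \<and> poly r 1 = 0 \<longrightarrow>
    (\<exists>c. (\<forall>t\<in>{0..1}. poly r t = (\<Sum>\<nu>\<in>{1..k-1}. c \<nu> * phi k \<nu> t)) \<and>
         (\<Sum>\<nu>\<in>{1..k-1}. (c \<nu>)\<^sup>2) \<le> K * integral {0..1} (\<lambda>t. (poly r t)\<^sup>2))"
    using ref_q[OF assms] by blast
  show ?thesis
  proof (intro exI[of _ K] conjI allI impI ballI)
    show "K \<ge> 0" by fact
    fix N :: nat and w assume N: "N \<ge> 1" and w: "w \<in> S2 k N"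
    have wV: "w \<in> Vh k N" using w by (rule S2_sub)
    have cw: "continuous_on UNIV w" using wV by (rule Vh_cont)
    have Nr: "real N > 0" using N by simp
    have loc: "\<exists>c. (\<forall>x\<in>{node N (int j - 1)..node N (int j)}. w x = (\<Sum>\<nu>\<in>{1..k-1}. c \<nu> * phi k \<nu> (x * real N - (real j - 1)))) \<and>
       (\<Sum>\<nu>\<in>{1..k-1}. (c \<nu>)\<^sup>2) \<le> K * real N * integral {node N (int j - 1)..node N (int j)} (\<lambda>x. (w x)\<^sup>2)"
      if j: "j \<in> {1..N}" for j
    proof -
      define a where "a = node N (int j - 1)"
      have nj: "node N (int j) = a + 1 / real N" unfolding a_def by (rule node_succ[OF N])
      obtain W where W: "degree W \<le> k" "\<forall>x\<in>{node N (int j - 1)..node N (int j)}. w x = poly W x"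
        using Vh_piece[OF wV j] by blast
      have W': "\<forall>x\<in>{a..a + 1 / real N}. w x = poly W x" using W(2) nj unfolding a_def by simp
      define r where "r = pcompose W [:a, 1 / real N:]"
      have degr: "degree r \<le> k"
        unfolding r_def using degree_pcompose_le[of W "[:a, 1 / real N:]"] W(1)
        by (cases "1 / real N = 0") auto
      have rt: "\<forall>t\<in>{0..1}. poly r t = w (a + t / real N)" using loc_scale(2)[OF N cw W'] unfolding r_def .
      have w0: "w a = 0" "w (a + 1 / real N) = 0"
        using w nj[symmetric] unfolding S2_def a_def by (auto simp del: of_int_diff)
      have r01: "poly r 0 = 0" "poly r 1 = 0" using rt w0 by auto
      obtain c where c1: "\<forall>t\<in>{0..1}. poly r t = (\<Sum>\<nu>\<in>{1..k-1}. c \<nu> * phi k \<nu> t)"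
        and c2: "(\<Sum>\<nu>\<in>{1..k-1}. (c \<nu>)\<^sup>2) \<le> K * integral {0..1} (\<lambda>t. (poly r t)\<^sup>2)"
        using K(2) degr r01 by blast
      have "integral {0..1} (\<lambda>t. (poly r t)\<^sup>2) = real N * integral {a..a + 1 / real N} (\<lambda>x. (w x)\<^sup>2)"
        unfolding r_def by (rule loc_scale(1)[OF N cw W'])
      then have c2': "(\<Sum>\<nu>\<in>{1..k-1}. (c \<nu>)\<^sup>2) \<le> K * real N * integral {node N (int j - 1)..node N (int j)} (\<lambda>x. (w x)\<^sup>2)"
        using c2 nj unfolding a_def by (simp add: mult.assoc)
      have "w x = (\<Sum>\<nu>\<in>{1..k-1}. c \<nu> * phi k \<nu> (x * real N - (real j - 1)))"
        if x: "x \<in> {node N (int j - 1)..node N (int j)}" for x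
      proof -
        define t where "t = x * real N - (real j - 1)"
        have xt: "x = a + t / real N" unfolding t_def a_def node_def using Nr by (simp add: field_simps)
        have t01: "t \<in> {0..1}" using node_bounds[OF N x] unfolding t_def by auto
        have "w x = poly r t" using rt t01 xt by simp
        then show ?thesis using c1 t01 unfolding t_def by simp
      qed
      then show ?thesis using c2' by blast
    qed
    then have "\<forall>j\<in>{1..N}. \<exists>c. (\<forall>x\<in>{node N (int j - 1)..node N (int j)}. w x = (\<Sum>\<nu>\<in>{1..k-1}. c \<nu> * phi k \<nu> (x * real N - (real j - 1)))) \<and>
       (\<Sum>\<nu>\<in>{1..k-1}. (c \<nu>)\<^sup>2) \<le> K * real N * integral {node N (int j - 1)..node N (int j)} (\<lambda>x. (w x)\<^sup>2)"
      by blast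
    from bchoice[OF this] obtain C where C: "\<forall>j\<in>{1..N}. (\<forall>x\<in>{node N (int j - 1)..node N (int j)}. w x = (\<Sum>\<nu>\<in>{1..k-1}. C j \<nu> * phi k \<nu> (x * real N - (real j - 1)))) \<and>
       (\<Sum>\<nu>\<in>{1..k-1}. (C j \<nu>)\<^sup>2) \<le> K * real N * integral {node N (int j - 1)..node N (int j)} (\<lambda>x. (w x)\<^sup>2)"
      by blast
    define c where "c = (\<lambda>p. C (fst p) (snd p))"
    show "\<exists>c. (\<forall>x\<in>{0..1}. w x = (\<Sum>p\<in>{1..N}\<times>{1..k-1}. c p * q k N (fst p) (snd p) x)) \<and>
      (\<Sum>p\<in>{1..N}\<times>{1..k-1}. (c p)\<^sup>2) \<le> K * real N * ip w w"
    proof (intro exI[of _ c] conjI ballI)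
      fix x :: real assume x: "x \<in> {0..1}"
      obtain j where j: "j \<in> {1..N}" "x \<in> {node N (int j - 1)..node N (int j)}" using find_j[OF N x] by blast
      have "(\<Sum>p\<in>{1..N}\<times>{1..k-1}. c p * q k N (fst p) (snd p) x) =
            (\<Sum>i\<in>{1..N}. \<Sum>\<nu>\<in>{1..k-1}. C i \<nu> * q k N i \<nu> x)"
        unfolding c_def by (simp add: sum.cartesian_product case_prod_beta)
      also have "\<dots> = (\<Sum>i\<in>{1..N}. if i = j then (\<Sum>\<nu>\<in>{1..k-1}. C i \<nu> * phi k \<nu> (x * real N - (real j - 1))) else 0)"
        by (rule sum.cong[OF refl]) (simp add: q_01[OF N _ j])
      also have "\<dots> = (\<Sum>\<nu>\<in>{1..k-1}. C j \<nu> * phi k \<nu> (x * real N - (real j - 1)))" using j(1) by simp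
      also have "\<dots> = w x" using C j by simp
      finally show "w x = (\<Sum>p\<in>{1..N}\<times>{1..k-1}. c p * q k N (fst p) (snd p) x)" by simp
    next
      have "(\<Sum>p\<in>{1..N}\<times>{1..k-1}. (c p)\<^sup>2) = (\<Sum>i\<in>{1..N}. \<Sum>\<nu>\<in>{1..k-1}. (C i \<nu>)\<^sup>2)"
        unfolding c_def by (simp add: sum.cartesian_product case_prod_beta)
      also have "\<dots> \<le> (\<Sum>i\<in>{1..N}. K * real N * integral {node N (int i - 1)..node N (int i)} (\<lambda>x. (w x)\<^sup>2))"
        using C by (intro sum_mono) blast
      also have "\<dots> = K * real N * integral {0..1} (\<lambda>x. (w x)\<^sup>2)"
        by (subst integral_split01[OF _ N]) (auto intro!: continuous_intros cw simp: sum_distrib_left)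
      also have "integral {0..1} (\<lambda>x. (w x)\<^sup>2) = ip w w"
        using ip_cont_eq_integral[OF cw cw] by (simp add: power2_eq_square)
      finally show "(\<Sum>p\<in>{1..N}\<times>{1..k-1}. (c p)\<^sup>2) \<le> K * real N * ip w w" .
    qed
  qed
qed

lemma powr_shift:
  assumes "N \<ge> 1"
  shows "C * (1 / real N) powr a * real N = C * (1 / real N) powr (a - 1)"
proof -
  have h: "1 / real N > 0" using assms by simp
  have "(1 / real N) powr (a - 1) = (1 / real N) powr a / (1 / real N) powr 1" by (rule powr_diff)
  also have "\<dots> = (1 / real N) powr a * real N" using h by simp
  finally show ?thesis by simp
qed

theorem lemma2p5:
  fixes \<kappa> :: nat and C1 C2 \<alpha> \<beta> :: real
  assumes "C1 > 0" and "C2 > 0" and "\<alpha> > 0" and "\<beta> > 0"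
  shows "\<exists>Ct1 > 0. \<exists>Ct2 > 0. \<forall>N::nat. N \<ge> 1 \<longrightarrow>
    (\<forall>v :: real \<Rightarrow> real. v \<in> borel_measurable lborel \<longrightarrow> periodic1 v \<longrightarrow>
       set_integrable lborel {0..1} (\<lambda>x. (v x)\<^sup>2) \<longrightarrow>
       ((\<forall>i\<in>{1..N}. \<bar>ip v (ell (2*\<kappa>+1) N i)\<bar> \<le> C1 * (1 / real N) powr \<alpha>)
          \<longrightarrow> l2norm (pi1 (2*\<kappa>+1) N v) \<le> Ct1 * (1 / real N) powr (\<alpha> - 1)) \<and>
       ((\<forall>i\<in>{1..N}. \<forall>m\<in>{1..2*\<kappa>}. \<bar>ip v (q (2*\<kappa>+1) N i m)\<bar> \<le> C2 * (1 / real N) powr \<beta>)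
          \<longrightarrow> l2norm (pi2 (2*\<kappa>+1) N v) \<le> Ct2 * (1 / real N) powr (\<beta> - 1)))"
proof -
  define k where "k = 2 * \<kappa> + 1"
  have k1: "k \<ge> 1" unfolding k_def by simp
  have km: "2 * \<kappa> = k - 1" unfolding k_def by simp
  obtain K1 where K1: "K1 \<ge> 0" "\<forall>N\<ge>1. \<forall>s\<in>Vh k N. (\<Sum>j\<in>{1..N}. (s (node N (int j)))\<^sup>2) \<le> K1 * real N * ip s s"
    using S1_nodal_bound[OF k1] by blast
  obtain K2 where K2: "K2 \<ge> 0" "\<forall>N\<ge>1. \<forall>w\<in>S2 k N. \<exists>c. (\<forall>x\<in>{0..1}. w x = (\<Sum>p\<in>{1..N}\<times>{1..k-1}. c p * q k N (fst p) (snd p) x)) \<and>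
      (\<Sum>p\<in>{1..N}\<times>{1..k-1}. (c p)\<^sup>2) \<le> K2 * real N * ip w w"
    using S2_repr[OF k1] by blast
  define ps where "ps = \<bar>psi k 1\<bar>"
  have ps: "ps > 0" unfolding ps_def using psi_1[OF k1] by simp
  define Ct1 where "Ct1 = C1 * sqrt K1 / ps + 1"
  define Ct2 where "Ct2 = C2 * sqrt (real (k - 1) * K2) + 1"
  have "C1 * sqrt K1 / ps \<ge> 0" using assms(1) K1(1) ps by simp
  then have Ct1: "Ct1 > 0" unfolding Ct1_def by linarith
  have "C2 * sqrt (real (k - 1) * K2) \<ge> 0" using assms(2) K2(1) by simp
  then have Ct2: "Ct2 > 0" unfolding Ct2_def by linarith
  have main: "(\<forall>v :: real \<Rightarrow> real. v \<in> borel_measurable lborel \<longrightarrow> periodic1 v \<longrightarrow>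
       set_integrable lborel {0..1} (\<lambda>x. (v x)\<^sup>2) \<longrightarrow>
       ((\<forall>i\<in>{1..N}. \<bar>ip v (ell k N i)\<bar> \<le> C1 * (1 / real N) powr \<alpha>)
          \<longrightarrow> l2norm (pi1 k N v) \<le> Ct1 * (1 / real N) powr (\<alpha> - 1)) \<and>
       ((\<forall>i\<in>{1..N}. \<forall>m\<in>{1..k-1}. \<bar>ip v (q k N i m)\<bar> \<le> C2 * (1 / real N) powr \<beta>)
          \<longrightarrow> l2norm (pi2 k N v) \<le> Ct2 * (1 / real N) powr (\<beta> - 1)))"
    if N: "N \<ge> 1" for N
  proof (intro allI impI conjI)
    fix v :: "real \<Rightarrow> real"
    assume vm: "v \<in> borel_measurable lborel" and vp: "periodic1 v"
      and vi: "set_integrable lborel {0..1} (\<lambda>x. (v x)\<^sup>2)"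
    have Lv: "L2 v" unfolding L2_def using vm vi by blast
    have hpos: "(1 / real N) powr \<alpha> \<ge> 0" "(1 / real N) powr \<beta> \<ge> 0"
      "(1 / real N) powr (\<alpha> - 1) \<ge> 0" "(1 / real N) powr (\<beta> - 1) \<ge> 0" by simp_all
    have Nr: "real N > 0" using N by simp
    {
      assume hyp: "\<forall>i\<in>{1..N}. \<bar>ip v (ell k N i)\<bar> \<le> C1 * (1 / real N) powr \<alpha>"
      have ellV: "\<And>i. i \<in> {1..N} \<Longrightarrow> ell k N i \<in> Vh k N" using ell_Vh[OF N k1] by blast
      have Lell: "\<And>i. i \<in> {1..N} \<Longrightarrow> L2 (ell k N i)" using ellV Vh_cont L2_cont by blast
      obtain c where c: "\<forall>i\<in>{1..N}. ip (\<lambda>x. v x - (\<Sum>j\<in>{1..N}. c j * ell k N j x)) (ell k N i) = 0"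
        using proj_exists[of "{1..N}" "ell k N" v, OF _ Lell Lv] by auto
      define p where "p = (\<lambda>x. \<Sum>j\<in>{1..N}. c j * ell k N j x)"
      have pV: "p \<in> Vh k N" unfolding p_def by (rule Vh_sum) (auto intro: ellV)
      have Lp: "L2 p" using pV Vh_cont L2_cont by blast
      have Lr: "L2 (\<lambda>x. v x - p x)" using Lv Lp by (rule L2_diff)
      have pS1: "p \<in> S1 k N"
      proof -
        have "ip p u = 0" if u: "u \<in> S2 k N" for u
        proof -
          have Lu: "L2 u" using u S2_sub Vh_cont L2_cont by blast
          have "ip p u = (\<Sum>j\<in>{1..N}. c j * ip (ell k N j) u)" unfolding p_def
            by (rule ip_sum[OF _ Lell Lu]) simp
          also have "\<dots> = 0" using ell_orth[OF N k1 _ u] by simp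
          finally show ?thesis .
        qed
        then show ?thesis unfolding S1_def using pV by blast
      qed
      have orth: "\<forall>w\<in>S1 k N. ip (\<lambda>x. v x - p x) w = 0"
      proof
        fix w assume w: "w \<in> S1 k N"
        have "ip (\<lambda>x. v x - p x) w = ip (\<lambda>x. v x - p x) (\<lambda>x. \<Sum>i\<in>{1..N}. (w (node N (int i)) / psi k 1) * ell k N i x)"
          by (rule ip_cong) (use S1_repr[OF N k1 w] in auto)
        also have "\<dots> = 0"
          by (rule ip_orth_sum[OF _ Lell Lr]) (use c in \<open>auto simp: p_def\<close>)
        finally show "ip (\<lambda>x. v x - p x) w = 0" .
      qed
      have pi: "pi1 k N v = p" unfolding pi1_def
      proof (rule l2proj_eq[OF _ _ pS1 orth Lv])
        show "\<And>f. f \<in> S1 k N \<Longrightarrow> continuous_on UNIV f \<and> periodic1 f"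
          using S1_sub Vh_cont Vh_periodic by blast
        show "\<And>f g. f \<in> S1 k N \<Longrightarrow> g \<in> S1 k N \<Longrightarrow> (\<lambda>x. f x - g x) \<in> S1 k N" by (rule S1_diff)
      qed
      have vpp: "ip v p = ip p p"
      proof -
        have "ip (\<lambda>x. v x - p x) p = 0" using orth pS1 by blast
        then show ?thesis using ip_diff[OF Lv Lp Lp] by simp
      qed
      define d where "d = (\<lambda>i. p (node N (int i)) / psi k 1)"
      have card: "real (card {1..N}) = real N" by simp
      have dsum: "(\<Sum>i\<in>{1..N}. (d i)\<^sup>2) * real (card {1..N}) \<le> (real N * K1 * real N / ps\<^sup>2) * ip p p"
      proof -
        have "(\<Sum>i\<in>{1..N}. (d i)\<^sup>2) = (\<Sum>i\<in>{1..N}. (p (node N (int i)))\<^sup>2) / ps\<^sup>2"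
          unfolding d_def ps_def by (simp add: power_divide sum_divide_distrib)
        also have "\<dots> \<le> K1 * real N * ip p p / ps\<^sup>2"
          using K1(2) N pV by (intro divide_right_mono) auto
        finally have "(\<Sum>i\<in>{1..N}. (d i)\<^sup>2) * real N \<le> (K1 * real N * ip p p / ps\<^sup>2) * real N"
          using Nr by (intro mult_right_mono) auto
        then show ?thesis unfolding card by (simp add: field_simps)
      qed
      have "sqrt (ip p p) \<le> C1 * (1 / real N) powr \<alpha> * sqrt (real N * K1 * real N / ps\<^sup>2)"
      proof (rule proj_bound[OF _ Lell Lv Lp vpp _ _ dsum])
        show "\<forall>x\<in>{0..1}. p x = (\<Sum>i\<in>{1..N}. d i * ell k N i x)" using S1_repr[OF N k1 pS1] unfolding d_def .
        show "\<And>i. i \<in> {1..N} \<Longrightarrow> \<bar>ip v (ell k N i)\<bar> \<le> C1 * (1 / real N) powr \<alpha>" using hyp by blast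
        show "C1 * (1 / real N) powr \<alpha> \<ge> 0" using assms(1) by simp
        show "real N * K1 * real N / ps\<^sup>2 \<ge> 0" using K1(1) by simp
      qed simp
      also have "sqrt (real N * K1 * real N / ps\<^sup>2) = real N * sqrt K1 / ps"
        using ps K1(1) by (simp add: real_sqrt_mult real_sqrt_divide)
      also have "C1 * (1 / real N) powr \<alpha> * (real N * sqrt K1 / ps) = (C1 * (1 / real N) powr \<alpha> * real N) * (sqrt K1 / ps)"
        by simp
      also have "\<dots> = C1 * (1 / real N) powr (\<alpha> - 1) * (sqrt K1 / ps)" by (simp only: powr_shift[OF N])
      also have "\<dots> \<le> Ct1 * (1 / real N) powr (\<alpha> - 1)"
        unfolding Ct1_def using hpos(3) by (simp add: algebra_simps)
      finally show "l2norm (pi1 k N v) \<le> Ct1 * (1 / real N) powr (\<alpha> - 1)"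
        unfolding pi l2norm_def .
    }
    {
      assume hyp: "\<forall>i\<in>{1..N}. \<forall>m\<in>{1..k-1}. \<bar>ip v (q k N i m)\<bar> \<le> C2 * (1 / real N) powr \<beta>"
      let ?I = "{1..N} \<times> {1..k-1}"
      let ?g = "\<lambda>p. q k N (fst p) (snd p)"
      have qV: "\<And>p. p \<in> ?I \<Longrightarrow> ?g p \<in> Vh k N" using q_Vh[OF N] by auto
      have qS: "\<And>p. p \<in> ?I \<Longrightarrow> ?g p \<in> S2 k N" using q_S2[OF N] by auto
      have Lq: "\<And>p. p \<in> ?I \<Longrightarrow> L2 (?g p)" using qV Vh_cont L2_cont by blast
      have fin: "finite ?I" by simp
      obtain c where c: "\<forall>i\<in>?I. ip (\<lambda>x. v x - (\<Sum>j\<in>?I. c j * ?g j x)) (?g i) = 0"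
        using proj_exists[of ?I ?g v, OF fin Lq Lv] by auto
      define p where "p = (\<lambda>x. \<Sum>j\<in>?I. c j * ?g j x)"
      have pV: "p \<in> Vh k N" unfolding p_def by (rule Vh_sum[OF fin qV])
      have Lp: "L2 p" using pV Vh_cont L2_cont by blast
      have Lr: "L2 (\<lambda>x. v x - p x)" using Lv Lp by (rule L2_diff)
      have pS2: "p \<in> S2 k N"
      proof -
        have "p (node N m) = 0" for m
        proof -
          have "p (node N m) = (\<Sum>j\<in>?I. c j * 0)" unfolding p_def
            by (rule sum.cong[OF refl]) (use qS in \<open>auto simp: S2_def\<close>)
          then show ?thesis by simp
        qed
        then show ?thesis unfolding S2_def using pV by blast
      qed
      have orth: "\<forall>w\<in>S2 k N. ip (\<lambda>x. v x - p x) w = 0"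
      proof
        fix w assume w: "w \<in> S2 k N"
        obtain e where e: "\<forall>x\<in>{0..1}. w x = (\<Sum>p\<in>?I. e p * ?g p x)" using K2(2) N w by blast
        have "ip (\<lambda>x. v x - p x) w = ip (\<lambda>x. v x - p x) (\<lambda>x. \<Sum>p\<in>?I. e p * ?g p x)"
          by (rule ip_cong) (use e in auto)
        also have "\<dots> = 0"
          by (rule ip_orth_sum[OF fin Lq Lr]) (use c in \<open>auto simp: p_def\<close>)
        finally show "ip (\<lambda>x. v x - p x) w = 0" .
      qed
      have pi: "pi2 k N v = p" unfolding pi2_def
      proof (rule l2proj_eq[OF _ _ pS2 orth Lv])
        show "\<And>f. f \<in> S2 k N \<Longrightarrow> continuous_on UNIV f \<and> periodic1 f"
          using S2_sub Vh_cont Vh_periodic by blast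
        show "\<And>f g. f \<in> S2 k N \<Longrightarrow> g \<in> S2 k N \<Longrightarrow> (\<lambda>x. f x - g x) \<in> S2 k N" by (rule S2_diff)
      qed
      have vpp: "ip v p = ip p p"
      proof -
        have "ip (\<lambda>x. v x - p x) p = 0" using orth pS2 by blast
        then show ?thesis using ip_diff[OF Lv Lp Lp] by simp
      qed
      obtain d where d1: "\<forall>x\<in>{0..1}. p x = (\<Sum>j\<in>?I. d j * ?g j x)"
        and d2: "(\<Sum>j\<in>?I. (d j)\<^sup>2) \<le> K2 * real N * ip p p" using K2(2) N pS2 by blast
      have card: "real (card ?I) = real N * real (k - 1)" by (simp add: card_cartesian_product)
      have dsum: "(\<Sum>j\<in>?I. (d j)\<^sup>2) * real (card ?I) \<le> (real N * real (k - 1) * K2 * real N) * ip p p"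
      proof -
        have "(\<Sum>j\<in>?I. (d j)\<^sup>2) * real (card ?I) \<le> (K2 * real N * ip p p) * (real N * real (k - 1))"
          unfolding card using d2 by (intro mult_right_mono) auto
        then show ?thesis by (simp add: algebra_simps)
      qed
      have "sqrt (ip p p) \<le> C2 * (1 / real N) powr \<beta> * sqrt (real N * real (k - 1) * K2 * real N)"
      proof (rule proj_bound[OF fin Lq Lv Lp vpp d1 _ dsum])
        show "\<And>i. i \<in> ?I \<Longrightarrow> \<bar>ip v (?g i)\<bar> \<le> C2 * (1 / real N) powr \<beta>" using hyp by auto
        show "C2 * (1 / real N) powr \<beta> \<ge> 0" using assms(2) by simp
        show "real N * real (k - 1) * K2 * real N \<ge> 0" using K2(1) by simp
      qed
      also have "sqrt (real N * real (k - 1) * K2 * real N) = real N * sqrt (real (k - 1) * K2)"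
        using K2(1) by (simp add: real_sqrt_mult)
      also have "C2 * (1 / real N) powr \<beta> * (real N * sqrt (real (k - 1) * K2)) = (C2 * (1 / real N) powr \<beta> * real N) * sqrt (real (k - 1) * K2)"
        by simp
      also have "\<dots> = C2 * (1 / real N) powr (\<beta> - 1) * sqrt (real (k - 1) * K2)" by (simp only: powr_shift[OF N])
      also have "\<dots> \<le> Ct2 * (1 / real N) powr (\<beta> - 1)"
        unfolding Ct2_def using hpos(4) by (simp add: algebra_simps)
      finally show "l2norm (pi2 k N v) \<le> Ct2 * (1 / real N) powr (\<beta> - 1)"
        unfolding pi l2norm_def .
    }
  qed
  have kk: "2 * \<kappa> + 1 = k" unfolding k_def ..
  have km2: "{1..2*\<kappa>} = {1..k-1}" using km by simp
  show ?thesis unfolding kk km2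
    apply (rule exI[of _ Ct1], rule conjI[OF Ct1], rule exI[of _ Ct2], rule conjI[OF Ct2])
    apply (rule allI, rule impI)
    by (erule main)
qed

end
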